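(* For every integer $d>1$, the Fine spectra satisfy $S^F(d-1)\subseteq S^F(d)$, and $$S^F(d)\setminus S^F(d-1)\subseteq \left\{\mu^F(P) \;\middle|\; P \text{ a lattice } d\text{-polytope whose Fine core } \operatorname{core}^F(P) \text{ is a single point}\right\}.$$
   Context: For a $d$-dimensional rational polytope $P\subseteq\mathbb{R}^d$ and $a\in(\mathbb{Z}^d)^*$ let $h_P(a)=\min_{x\in P}\langle a,x\rangle$. For $s>0$ the Fine adjoint polytope is $P^{F(s)}=\{x\in\mathbb{R}^d : \langle a,x\rangle\ge h_P(a)+s \text{ for all } a\in(\mathbb{Z}^d)^*\setminus\{0\}\}$. The Fine $\mathbb{Q}$-codegree is $\mu^F(P)=(\sup\{s>0 : P^{F(s)}\neq\emptyset\})^{-1}$, the Fine number is $n^F(P)=1/\mu^F(P)$, and the Fine core is $\operatorname{core}^F(P)=P^{F(n^F(P))}$. A lattice polytope is a polytope with vertices in $\mathbb{Z}^d$. The Fine spectrum in dimension $d$ is $S^F(d)=\{\mu^F(P) : P \text{ a } d\text{-dimensional lattice polytope}\}$. *)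

theory Defs
  imports "HOL-Analysis.Analysis"
begin

text \<open>Points of R^d are represented as functions nat => real vanishing at
indices >= d; dual lattice vectors as functions nat => int vanishing at indices >= d.\<close>

definition Rd :: "nat \<Rightarrow> (nat \<Rightarrow> real) set" where
  "Rd d = {x. \<forall>i\<ge>d. x i = 0}"

definition Zd :: "nat \<Rightarrow> (nat \<Rightarrow> real) set" where
  "Zd d = {x \<in> Rd d. \<forall>i. x i \<in> \<int>}"

definition dualZd :: "nat \<Rightarrow> (nat \<Rightarrow> int) set" where
  "dualZd d = {a. \<forall>i\<ge>d. a i = 0}"

definition pairing :: "nat \<Rightarrow> (nat \<Rightarrow> int) \<Rightarrow> (nat \<Rightarrow> real) \<Rightarrow> real" where
  "pairing d a x = (\<Sum>i<d. real_of_int (a i) * x i)"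

definition conv :: "(nat \<Rightarrow> real) set \<Rightarrow> (nat \<Rightarrow> real) set" where
  "conv V = {x. \<exists>u. (\<forall>v\<in>V. 0 \<le> u v) \<and> (\<Sum>v\<in>V. u v) = 1 \<and>
                    x = (\<lambda>i. \<Sum>v\<in>V. u v * v i)}"

definition lattice_polytope :: "nat \<Rightarrow> (nat \<Rightarrow> real) set \<Rightarrow> bool" where
  "lattice_polytope d P \<longleftrightarrow> (\<exists>V. finite V \<and> V \<noteq> {} \<and> V \<subseteq> Zd d \<and> P = conv V)"

definition full_dim :: "nat \<Rightarrow> (nat \<Rightarrow> real) set \<Rightarrow> bool" where
  "full_dim d P \<longleftrightarrow> \<not> (\<exists>c :: nat \<Rightarrow> real. \<exists>b. (\<exists>i<d. c i \<noteq> 0) \<and>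
       (\<forall>x\<in>P. (\<Sum>i<d. c i * x i) = b))"

definition hP :: "nat \<Rightarrow> (nat \<Rightarrow> real) set \<Rightarrow> (nat \<Rightarrow> int) \<Rightarrow> real" where
  "hP d P a = Inf (pairing d a ` P)"

definition fine_adjoint :: "nat \<Rightarrow> (nat \<Rightarrow> real) set \<Rightarrow> real \<Rightarrow> (nat \<Rightarrow> real) set" where
  "fine_adjoint d P s = {x \<in> Rd d. \<forall>a \<in> dualZd d. (\<exists>i<d. a i \<noteq> 0) \<longrightarrow> pairing d a x \<ge> hP d P a + s}"

definition fine_number :: "nat \<Rightarrow> (nat \<Rightarrow> real) set \<Rightarrow> real" where
  "fine_number d P = Sup {s. s > 0 \<and> fine_adjoint d P s \<noteq> {}}"

definition fine_codegree :: "nat \<Rightarrow> (nat \<Rightarrow> real) set \<Rightarrow> real" where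
  "fine_codegree d P = inverse (fine_number d P)"

definition fine_core :: "nat \<Rightarrow> (nat \<Rightarrow> real) set \<Rightarrow> (nat \<Rightarrow> real) set" where
  "fine_core d P = fine_adjoint d P (fine_number d P)"

definition fine_spectrum :: "nat \<Rightarrow> real set" where
  "fine_spectrum d = {fine_codegree d P | P. lattice_polytope d P \<and> full_dim d P}"

end

theory Submission
  imports Defs
begin

definition lin :: "nat \<Rightarrow> (nat \<Rightarrow> real) \<Rightarrow> (nat \<Rightarrow> real) \<Rightarrow> real" where
  "lin d c x = (\<Sum>i<d. c i * x i)"

lemma pairing_lin: "pairing d a x = lin d (\<lambda>i. real_of_int (a i)) x"
  by (simp add: pairing_def lin_def)

lemma lin_comb:
  "lin d c (\<lambda>i. \<Sum>v\<in>V. u v * v i) = (\<Sum>v\<in>V. u v * lin d c v)"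
  unfolding lin_def
  by (simp add: sum_distrib_left mult_ac sum.swap[of _ "{..<d}" V])

lemma pairing_comb:
  "pairing d a (\<lambda>i. \<Sum>v\<in>V. u v * v i) = (\<Sum>v\<in>V. u v * pairing d a v)"
  unfolding pairing_lin by (rule lin_comb)

lemma convex_sum_ge:
  fixes f u :: "'a \<Rightarrow> real"
  assumes "\<forall>v\<in>V. 0 \<le> u v" "sum u V = 1" "\<forall>v\<in>V. m \<le> f v"
  shows "m \<le> (\<Sum>v\<in>V. u v * f v)"
proof -
  have "(\<Sum>v\<in>V. u v * m) \<le> (\<Sum>v\<in>V. u v * f v)"
    by (rule sum_mono) (use assms in \<open>auto intro: mult_left_mono\<close>)
  moreover have "(\<Sum>v\<in>V. u v * m) = m" using assms(2) by (simp add: sum_distrib_right[symmetric])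
  ultimately show ?thesis by simp
qed

lemma convex_sum_eq:
  fixes f u :: "'a \<Rightarrow> real"
  assumes "sum u V = 1" "\<forall>v\<in>V. f v = m"
  shows "(\<Sum>v\<in>V. u v * f v) = m"
proof -
  have "(\<Sum>v\<in>V. u v * f v) = (\<Sum>v\<in>V. u v * m)" using assms by simp
  also have "\<dots> = m" using assms(1) by (simp add: sum_distrib_right[symmetric])
  finally show ?thesis .
qed

lemma V_sub_conv: assumes "finite V" "v \<in> V" shows "v \<in> conv V"
proof -
  define u where "u = (\<lambda>w. if w = v then (1::real) else 0)"
  have "(\<lambda>i. \<Sum>w\<in>V. u w * w i) = v"
  proof
    fix i
    have "(\<Sum>w\<in>V. u w * w i) = (\<Sum>w\<in>V. if w = v then v i else 0)"
      by (rule sum.cong) (auto simp: u_def)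
    then show "(\<Sum>w\<in>V. u w * w i) = v i" using assms by simp
  qed
  moreover have "(\<Sum>w\<in>V. u w) = 1" using assms by (simp add: u_def)
  ultimately show ?thesis unfolding conv_def u_def by (auto intro!: exI[of _ u] simp: u_def)
qed

lemma conv_Rd: assumes "V \<subseteq> Rd d" "x \<in> conv V" shows "x \<in> Rd d"
  using assms unfolding conv_def Rd_def by (auto intro!: sum.neutral)

lemma hP_min:
  assumes "finite V" "V \<noteq> {}"
  shows "hP d (conv V) a = Min (pairing d a ` V)"
  unfolding hP_def
proof (rule cInf_eq_minimum)
  have "Min (pairing d a ` V) \<in> pairing d a ` V" using assms by simp
  then show "Min (pairing d a ` V) \<in> pairing d a ` conv V"
    using V_sub_conv[OF assms(1)] by blast
next
  fix y assume "y \<in> pairing d a ` conv V"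
  then obtain x where x: "x \<in> conv V" "y = pairing d a x" by auto
  then obtain u where u: "\<forall>v\<in>V. 0 \<le> u v" "(\<Sum>v\<in>V. u v) = 1" "x = (\<lambda>i. \<Sum>v\<in>V. u v * v i)"
    unfolding conv_def by auto
  have "Min (pairing d a ` V) \<le> (\<Sum>v\<in>V. u v * pairing d a v)"
    by (rule convex_sum_ge) (use u assms in auto)
  then show "Min (pairing d a ` V) \<le> y" using x u pairing_comb by simp
qed

lemma hP_le: assumes "finite V" "v \<in> V" shows "hP d (conv V) a \<le> pairing d a v"
proof -
  have "V \<noteq> {}" using assms by auto
  then show ?thesis using assms by (simp add: hP_min[OF assms(1)])
qed

lemma hP_attained: assumes "finite V" "V \<noteq> {}" shows "\<exists>v\<in>V. hP d (conv V) a = pairing d a v"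
proof -
  have "Min (pairing d a ` V) \<in> pairing d a ` V" using assms by simp
  then show ?thesis using hP_min[OF assms] by auto
qed

lemma hP_lower: assumes "finite V" "V \<noteq> {}" "x \<in> conv V" shows "hP d (conv V) a \<le> pairing d a x"
proof -
  obtain u where u: "\<forall>v\<in>V. 0 \<le> u v" "(\<Sum>v\<in>V. u v) = 1" "x = (\<lambda>i. \<Sum>v\<in>V. u v * v i)"
    using assms(3) unfolding conv_def by auto
  have "hP d (conv V) a \<le> (\<Sum>v\<in>V. u v * pairing d a v)"
    by (rule convex_sum_ge) (use u assms hP_le in auto)
  then show ?thesis using u pairing_comb by simp
qed

lemma pairing_Ints: assumes "v \<in> Zd d" shows "pairing d a v \<in> \<int>"
  using assms unfolding pairing_def Zd_def by (auto intro!: Ints_sum Ints_mult)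

definition Sset :: "nat \<Rightarrow> (nat \<Rightarrow> real) set \<Rightarrow> real set" where
  "Sset d P = {s. s > 0 \<and> fine_adjoint d P s \<noteq> {}}"

lemma fine_number_Sset: "fine_number d P = Sup (Sset d P)"
  by (simp add: fine_number_def Sset_def)

lemma adj_mono: "x \<in> fine_adjoint d P s \<Longrightarrow> t \<le> s \<Longrightarrow> x \<in> fine_adjoint d P t"
  unfolding fine_adjoint_def by force

lemma Ints_eq_aux: fixes x y :: real assumes "y \<le> x" "x \<in> \<int>" "y \<in> \<int>" "x < y + 1" shows "x = y"
proof -
  obtain m n where "x = of_int m" "y = of_int n" using assms by (metis Ints_cases)
  then show ?thesis using assms by simp
qed

locale lp =
  fixes d :: nat and V :: "(nat \<Rightarrow> real) set"
  assumes fin: "finite V" and ne: "V \<noteq> {}" and sub: "V \<subseteq> Zd d"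
begin

abbreviation "P \<equiv> conv V"

lemma V_Rd: "V \<subseteq> Rd d" using sub by (auto simp: Zd_def)

lemma P_Rd: "x \<in> P \<Longrightarrow> x \<in> Rd d" using conv_Rd V_Rd by blast

lemma hP_int: "hP d P a \<in> \<int>"
  using hP_attained[OF fin ne, of d a] pairing_Ints sub by auto

lemma lin_const_conv:
  assumes "\<forall>v\<in>V. lin d c v = b" "x \<in> P"
  shows "lin d c x = b"
proof -
  obtain u where u: "\<forall>v\<in>V. 0 \<le> u v" "(\<Sum>v\<in>V. u v) = 1" "x = (\<lambda>i. \<Sum>v\<in>V. u v * v i)"
    using assms(2) unfolding conv_def by auto
  have "lin d c x = (\<Sum>v\<in>V. u v * lin d c v)" using u lin_comb by simp
  also have "\<dots> = b" by (rule convex_sum_eq) (use u assms in auto)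
  finally show ?thesis .
qed

lemma nonconst:
  assumes fd: "full_dim d P" and a: "\<exists>i<d. a i \<noteq> 0"
  shows "\<exists>v\<in>V. pairing d a v \<ge> hP d P a + 1"
proof (rule ccontr)
  assume "\<not> ?thesis"
  then have lt: "\<forall>v\<in>V. pairing d a v < hP d P a + 1" by auto
  have eq: "\<forall>v\<in>V. pairing d a v = hP d P a"
  proof
    fix v assume v: "v \<in> V"
    have "hP d P a \<le> pairing d a v" using hP_le[OF fin v] .
    moreover have "pairing d a v \<in> \<int>" using pairing_Ints sub v by auto
    moreover note hP_int
    ultimately show "pairing d a v = hP d P a" using lt v Ints_eq_aux by blast
  qed
  have "\<forall>x\<in>P. lin d (\<lambda>i. real_of_int (a i)) x = hP d P a"
    using lin_const_conv eq by (simp add: pairing_lin)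
  moreover have "\<exists>i<d. real_of_int (a i) \<noteq> 0" using a by auto
  ultimately have "\<exists>c b. (\<exists>i<d. c i \<noteq> 0) \<and> (\<forall>x\<in>P. (\<Sum>i<d. c i * x i) = b)"
    unfolding lin_def by (intro exI[of _ "\<lambda>i. real_of_int (a i)"] exI[of _ "hP d P a"]) auto
  then show False using fd unfolding full_dim_def by blast
qed

lemma Sset_ne:
  assumes fd: "full_dim d P"
  shows "(1 / real (card V)) \<in> Sset d P"
proof -
  define k where "k = real (card V)"
  have k: "k > 0" using fin ne by (simp add: k_def card_gt_0_iff)
  define xb where "xb = (\<lambda>i. \<Sum>v\<in>V. (1/k) * v i)"
  have xbP: "xb \<in> P" unfolding conv_def xb_def using k fin
    by (auto intro!: exI[of _ "\<lambda>v. 1/k"] simp: k_def)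
  have "xb \<in> fine_adjoint d P (1/k)"
    unfolding fine_adjoint_def
  proof (intro CollectI conjI ballI impI)
    show "xb \<in> Rd d" using P_Rd xbP by blast
    fix a assume "a \<in> dualZd d" "\<exists>i<d. a i \<noteq> 0"
    then obtain v1 where v1: "v1 \<in> V" "pairing d a v1 \<ge> hP d P a + 1" using nonconst fd by blast
    have "(\<Sum>v\<in>V. pairing d a v) = pairing d a v1 + (\<Sum>v\<in>V-{v1}. pairing d a v)"
      using fin v1 by (simp add: sum.remove)
    moreover have "(\<Sum>v\<in>V-{v1}. pairing d a v) \<ge> (\<Sum>v\<in>V-{v1}. hP d P a)"
      by (rule sum_mono) (use hP_le fin in auto)
    moreover have "(\<Sum>v\<in>V-{v1}. hP d P a) = (k - 1) * hP d P a"
    proof -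
      have "card V \<ge> 1" using fin ne by (simp add: Suc_leI card_gt_0_iff)
      then have "real (card (V - {v1})) = k - 1" using fin v1 by (simp add: k_def card_Diff_singleton of_nat_diff)
      then show ?thesis by simp
    qed
    ultimately have "(\<Sum>v\<in>V. pairing d a v) \<ge> k * hP d P a + 1" using v1 by (simp add: algebra_simps)
    moreover have "pairing d a xb = (1/k) * (\<Sum>v\<in>V. pairing d a v)"
      unfolding xb_def pairing_comb by (simp add: sum_distrib_left)
    ultimately have "pairing d a xb \<ge> (1/k) * (k * hP d P a + 1)"
      using k by (auto intro: divide_right_mono)
    then show "hP d P a + 1/k \<le> pairing d a xb" using k by (simp add: field_simps)
  qed
  then show ?thesis unfolding Sset_def k_def using k k_def by auto
qed

lemma Sset_bdd:
  assumes "d > 0" "s \<in> Sset d P"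
  shows "s \<le> (\<Sum>v\<in>V. \<bar>v 0\<bar>)"
proof -
  obtain x where x: "x \<in> fine_adjoint d P s" and s: "s > 0" using assms(2) by (auto simp: Sset_def)
  define e :: "nat \<Rightarrow> int" where "e = (\<lambda>i. if i = 0 then 1 else 0)"
  define e' :: "nat \<Rightarrow> int" where "e' = (\<lambda>i. if i = 0 then -1 else 0)"
  have pe: "pairing d e y = y 0" for y
  proof -
    have "pairing d e y = (\<Sum>i<d. if i = 0 then y 0 else 0)"
      unfolding pairing_def by (rule sum.cong) (auto simp: e_def)
    then show ?thesis using assms(1) by simp
  qed
  have pe': "pairing d e' y = - y 0" for y
  proof -
    have "pairing d e' y = (\<Sum>i<d. if i = 0 then - y 0 else 0)"
      unfolding pairing_def by (rule sum.cong) (auto simp: e'_def)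
    then show ?thesis using assms(1) by simp
  qed
  have "e \<in> dualZd d" "e' \<in> dualZd d" using assms(1) by (auto simp: dualZd_def e_def e'_def)
  moreover have "\<exists>i<d. e i \<noteq> 0" "\<exists>i<d. e' i \<noteq> 0" using assms(1) by (auto simp: e_def e'_def)
  ultimately have h1: "pairing d e x \<ge> hP d P e + s" and h2: "pairing d e' x \<ge> hP d P e' + s"
    using x unfolding fine_adjoint_def by auto
  obtain v1 where v1: "v1 \<in> V" "hP d P e = pairing d e v1" using hP_attained[OF fin ne] by blast
  obtain v2 where v2: "v2 \<in> V" "hP d P e' = pairing d e' v2" using hP_attained[OF fin ne] by blast
  have "\<bar>v1 0\<bar> \<le> (\<Sum>v\<in>V. \<bar>v 0\<bar>)" "\<bar>v2 0\<bar> \<le> (\<Sum>v\<in>V. \<bar>v 0\<bar>)"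
    using v1 v2 fin by (auto intro!: member_le_sum)
  moreover have "v1 0 \<le> \<bar>v1 0\<bar>" "- v2 0 \<le> \<bar>v2 0\<bar>" by auto
  moreover have "x 0 \<ge> v1 0 + s" "- x 0 \<ge> - v2 0 + s" using h1 h2 v1 v2 pe pe' by auto
  ultimately show ?thesis by linarith
qed

lemma Sset_bdd_above: "d > 0 \<Longrightarrow> bdd_above (Sset d P)"
  using Sset_bdd unfolding bdd_above_def by blast

lemma fn_pos: "d > 0 \<Longrightarrow> full_dim d P \<Longrightarrow> fine_number d P > 0"
proof -
  assume "d > 0" "full_dim d P"
  then have "1 / real (card V) \<in> Sset d P" "1 / real (card V) > 0" using Sset_ne fin ne
    by (auto simp: card_gt_0_iff)
  then show ?thesis unfolding fine_number_Sset using Sset_bdd_above[OF \<open>d > 0\<close>]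
    by (meson cSup_upper less_le_trans)
qed

lemma fn_upper: "d > 0 \<Longrightarrow> s \<in> Sset d P \<Longrightarrow> s \<le> fine_number d P"
  unfolding fine_number_Sset using Sset_bdd_above by (simp add: cSup_upper)

end

lemma pairing_Suc: "pairing (Suc e) a x = pairing e a x + real_of_int (a e) * x e"
  by (simp add: pairing_def)

lemma lin_Suc: "lin (Suc e) c x = lin e c x + c e * x e"
  by (simp add: lin_def)

lemma pairing_upd_x: "pairing e a (x(e:=t)) = pairing e a x"
  unfolding pairing_def by (rule sum.cong) auto

lemma pairing_upd_a: "pairing e (a(e:=k)) x = pairing e a x"
  unfolding pairing_def by (rule sum.cong) auto

lemma lin_upd_x: "lin e c (x(e:=t)) = lin e c x"
  unfolding lin_def by (rule sum.cong) auto

lemma part1: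
  assumes "d > 1" "lattice_polytope (d-1) Q" "full_dim (d-1) Q"
  shows "\<exists>P. lattice_polytope d P \<and> full_dim d P \<and> fine_number d P = fine_number (d-1) Q"
proof -
  define e where "e = d - 1"
  have dS: "d = Suc e" and e0: "e > 0" using assms(1) by (auto simp: e_def)
  obtain W where W: "finite W" "W \<noteq> {}" "W \<subseteq> Zd e" "Q = conv W"
    using assms(2) unfolding lattice_polytope_def e_def by auto
  interpret Q: lp e W using W by unfold_locales auto
  define n where "n = fine_number e Q"
  define m :: real where "m = of_nat (nat \<lceil>2*n\<rceil> + 1)"
  have m1: "m \<ge> 1" and m2: "2 * n \<le> m" unfolding m_def by (auto, linarith)
  have mZ: "m \<in> \<int>" unfolding m_def by simp
  define V where "V = (\<lambda>(w,t). w(e := t)) ` (W \<times> {0, m})"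
  have Vfin: "finite V" using W by (simp add: V_def)
  have Vne: "V \<noteq> {}" using W by (simp add: V_def)
  have VZ: "V \<subseteq> Zd d"
  proof
    fix v assume "v \<in> V"
    then obtain w t where wt: "w \<in> W" "t \<in> {0,m}" "v = w(e:=t)" by (auto simp: V_def)
    then have "w \<in> Zd e" using W by auto
    then show "v \<in> Zd d" using wt mZ dS unfolding Zd_def Rd_def by auto
  qed
  interpret PP: lp d V using Vfin Vne VZ by unfold_locales auto
  have memV: "w(e:=t) \<in> V" if "w \<in> W" "t \<in> {0,m}" for w t
    using that unfolding V_def by auto
  have WR: "w \<in> Rd e" if "w \<in> W" for w using that Q.V_Rd by auto
  have pV: "pairing d a (w(e:=t)) = pairing e a w + real_of_int (a e) * t" for a w t
    by (simp add: dS pairing_Suc pairing_upd_x)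
  have lV: "lin d c (w(e:=t)) = lin e c w + c e * t" for c w t
    by (simp add: dS lin_Suc lin_upd_x)
  have fd: "full_dim d (conv V)"
    unfolding full_dim_def
  proof
    assume "\<exists>c b. (\<exists>i<d. c i \<noteq> 0) \<and> (\<forall>x\<in>conv V. (\<Sum>i<d. c i * x i) = b)"
    then obtain c b where c: "\<exists>i<d. c i \<noteq> 0" and cb: "\<forall>x\<in>conv V. lin d c x = b"
      unfolding lin_def by blast
    obtain w0 where w0: "w0 \<in> W" using W by auto
    have "lin d c (w0(e:=0)) = b" "lin d c (w0(e:=m)) = b"
      using cb V_sub_conv[OF Vfin] memV w0 by auto
    then have ce: "c e = 0" using lV m1 by simp
    have "\<forall>w\<in>W. lin e c w = b"
      using cb V_sub_conv[OF Vfin] memV lV by fastforce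
    then have "\<forall>x\<in>Q. lin e c x = b" using Q.lin_const_conv W by auto
    then have "\<forall>i<e. c i = 0" using assms(3) unfolding full_dim_def e_def[symmetric] lin_def by blast
    then show False using c ce dS less_Suc_eq by auto
  qed
  have S1: "Sset d (conv V) \<subseteq> Sset e Q"
  proof
    fix s assume "s \<in> Sset d (conv V)"
    then obtain x where x: "x \<in> fine_adjoint d (conv V) s" and s: "s > 0" by (auto simp: Sset_def)
    have xR: "x \<in> Rd d" using x by (auto simp: fine_adjoint_def)
    have "x(e:=0) \<in> fine_adjoint e Q s"
      unfolding fine_adjoint_def
    proof (intro CollectI conjI ballI impI)
      show "x(e:=0) \<in> Rd e" using xR dS by (auto simp: Rd_def)
      fix b assume b: "b \<in> dualZd e" "\<exists>i<e. b i \<noteq> 0"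
      obtain i where i: "i < e" "b i \<noteq> 0" using b by auto
      have bd: "b \<in> dualZd d" "\<exists>i<d. b i \<noteq> 0" using b dS i by (auto simp: dualZd_def intro!: exI[of _ i])
      then have "pairing d b x \<ge> hP d (conv V) b + s" using x by (auto simp: fine_adjoint_def)
      moreover have "pairing d b x = pairing e b (x(e:=0))"
        using b by (simp add: dS pairing_Suc pairing_upd_x dualZd_def)
      moreover obtain v where v: "v \<in> V" "hP d (conv V) b = pairing d b v"
        using hP_attained[OF Vfin Vne] by blast
      moreover obtain w t where wt: "w \<in> W" "v = w(e:=t)" using v(1) by (auto simp: V_def)
      moreover have "pairing d b v = pairing e b w" using wt b by (simp add: pV dualZd_def)
      moreover have "hP e Q b \<le> pairing e b w" using hP_le[OF W(1) wt(1)] W(4) by simp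
      ultimately show "hP e Q b + s \<le> pairing e b (x(e:=0))" by linarith
    qed
    then show "s \<in> Sset e Q" using s by (auto simp: Sset_def)
  qed
  have S2: "Sset e Q \<subseteq> Sset d (conv V)"
  proof
    fix s assume sQ: "s \<in> Sset e Q"
    then obtain y where y: "y \<in> fine_adjoint e Q s" and s: "s > 0" by (auto simp: Sset_def)
    have "s \<le> n" unfolding n_def using Q.fn_upper[OF e0] sQ W(4) by simp
    then have sm: "s \<le> m / 2" using m2 by simp
    have yR: "y \<in> Rd e" using y by (auto simp: fine_adjoint_def)
    have "y(e := m/2) \<in> fine_adjoint d (conv V) s"
      unfolding fine_adjoint_def
    proof (intro CollectI conjI ballI impI)
      show "y(e:=m/2) \<in> Rd d" using yR dS by (auto simp: Rd_def)
      fix a assume a: "a \<in> dualZd d" "\<exists>i<d. a i \<noteq> 0"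
      have px: "pairing d a (y(e:=m/2)) = pairing e a y + real_of_int (a e) * (m/2)"
        by (rule pV)
      show "hP d (conv V) a + s \<le> pairing d a (y(e:=m/2))"
      proof (cases "\<exists>i<e. a i \<noteq> 0")
        case True
        have a': "a(e:=0) \<in> dualZd e" "\<exists>i<e. (a(e:=0)) i \<noteq> 0" using a True dS
          by (auto simp: dualZd_def)
        then have ya: "pairing e (a(e:=0)) y \<ge> hP e Q (a(e:=0)) + s" using y by (auto simp: fine_adjoint_def)
        obtain w where w: "w \<in> W" "hP e Q (a(e:=0)) = pairing e (a(e:=0)) w"
          using hP_attained[OF W(1) W(2)] W(4) by blast
        define t where "t = (if a e \<ge> 0 then 0 else m)"
        have "t \<in> {0,m}" by (simp add: t_def)
        then have "hP d (conv V) a \<le> pairing d a (w(e:=t))" using hP_le[OF Vfin memV] w by blast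
        also have "\<dots> = pairing e a w + real_of_int (a e) * t" by (rule pV)
        finally have h: "hP d (conv V) a \<le> pairing e a w + real_of_int (a e) * t" .
        have "real_of_int (a e) * t \<le> real_of_int (a e) * (m/2)"
          using m1 by (auto simp: t_def mult_left_mono_neg)
        then show ?thesis using h ya w px by (simp add: pairing_upd_a)
      next
        case False
        then have ae: "a e \<noteq> 0" using a dS less_Suc_eq by auto
        have p0: "pairing e a z = 0" for z using False unfolding pairing_def by simp
        obtain w0 where w0: "w0 \<in> W" using W by auto
        show ?thesis
        proof (cases "a e > 0")
          case True
          have "hP d (conv V) a \<le> pairing d a (w0(e:=0))" using hP_le[OF Vfin memV] w0 by blast
          also have "\<dots> = 0" using pV p0 by simp
          finally have "hP d (conv V) a \<le> 0" .
          moreover have "real_of_int (a e) * (m/2) \<ge> 1 * (m/2)"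
            using True m1 by (intro mult_right_mono) auto
          ultimately show ?thesis using px p0 sm by simp
        next
          case False
          then have ae': "a e \<le> -1" using ae by simp
          have "hP d (conv V) a \<le> pairing d a (w0(e:=m))" using hP_le[OF Vfin memV] w0 by blast
          also have "\<dots> = real_of_int (a e) * m" using pV p0 by simp
          finally have "hP d (conv V) a \<le> real_of_int (a e) * m" .
          moreover have "- real_of_int (a e) * (m/2) \<ge> 1 * (m/2)"
            using ae' m1 by (intro mult_right_mono) auto
          ultimately show ?thesis using px p0 sm by (simp add: algebra_simps)
        qed
      qed
    qed
    then show "s \<in> Sset d (conv V)" using s by (auto simp: Sset_def)
  qed
  have "fine_number d (conv V) = fine_number (d-1) Q"
    using S1 S2 by (simp add: fine_number_Sset e_def)
  moreover have "lattice_polytope d (conv V)" unfolding lattice_polytope_def using Vfin Vne VZ by auto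
  ultimately show ?thesis using fd by blast
qed


lemma compact_box: "compact (PiE UNIV (\<lambda>i. {lo i .. (hi i::real)}))"
proof -
  have "compactin (product_topology (\<lambda>i. euclidean) UNIV) (PiE UNIV (\<lambda>i. {lo i .. (hi i::real)}))"
    by (subst compactin_PiE) (auto simp: compactin_euclidean_iff)
  then show ?thesis by (simp add: euclidean_product_topology compactin_euclidean_iff)
qed

lemma cont_pairing: "continuous_on UNIV (\<lambda>x. pairing d a x)"
  unfolding pairing_def by (intro continuous_intros continuous_on_product_coordinates)

lemma closed_adj: "closed (fine_adjoint d P s)"
proof -
  have "fine_adjoint d P s = {x. \<forall>i. d \<le> i \<longrightarrow> x i = 0} \<inter>
      {x. \<forall>a. a \<in> dualZd d \<and> (\<exists>i<d. a i \<noteq> 0) \<longrightarrow> hP d P a + s \<le> pairing d a x}"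
    unfolding fine_adjoint_def Rd_def by auto
  moreover have "closed {x::nat\<Rightarrow>real. \<forall>i. d \<le> i \<longrightarrow> x i = 0}"
    by (intro closed_Collect_all closed_Collect_imp closed_Collect_eq continuous_on_product_coordinates
        continuous_on_const) auto
  moreover have "closed {x. \<forall>a. a \<in> dualZd d \<and> (\<exists>i<d. a i \<noteq> 0) \<longrightarrow> hP d P a + s \<le> pairing d a x}"
    by (intro closed_Collect_all closed_Collect_imp closed_Collect_le cont_pairing
        continuous_on_const) auto
  ultimately show ?thesis by auto
qed

context lp begin

lemma adj_box:
  assumes x: "x \<in> fine_adjoint d P s" and s: "s \<ge> 0" and i: "i < d"
  shows "\<bar>x i\<bar> \<le> (\<Sum>v\<in>V. \<bar>v i\<bar>)"
proof -
  define e :: "nat \<Rightarrow> int" where "e = (\<lambda>j. if j = i then 1 else 0)"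
  define e' :: "nat \<Rightarrow> int" where "e' = (\<lambda>j. if j = i then -1 else 0)"
  have pe: "pairing d e y = y i" for y
  proof -
    have "pairing d e y = (\<Sum>j<d. if j = i then y i else 0)"
      unfolding pairing_def by (rule sum.cong) (auto simp: e_def)
    then show ?thesis using i by simp
  qed
  have pe': "pairing d e' y = - y i" for y
  proof -
    have "pairing d e' y = (\<Sum>j<d. if j = i then - y i else 0)"
      unfolding pairing_def by (rule sum.cong) (auto simp: e'_def)
    then show ?thesis using i by simp
  qed
  have "e \<in> dualZd d" "e' \<in> dualZd d" using i by (auto simp: dualZd_def e_def e'_def)
  moreover have "\<exists>j<d. e j \<noteq> 0" "\<exists>j<d. e' j \<noteq> 0" using i by (auto simp: e_def e'_def)
  ultimately have h1: "pairing d e x \<ge> hP d P e + s" and h2: "pairing d e' x \<ge> hP d P e' + s"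
    using x unfolding fine_adjoint_def by auto
  obtain v1 where v1: "v1 \<in> V" "hP d P e = pairing d e v1" using hP_attained[OF fin ne] by blast
  obtain v2 where v2: "v2 \<in> V" "hP d P e' = pairing d e' v2" using hP_attained[OF fin ne] by blast
  have "\<bar>v1 i\<bar> \<le> (\<Sum>v\<in>V. \<bar>v i\<bar>)" "\<bar>v2 i\<bar> \<le> (\<Sum>v\<in>V. \<bar>v i\<bar>)"
    using v1 v2 fin by (auto intro!: member_le_sum)
  moreover have "- \<bar>v1 i\<bar> \<le> v1 i" "v2 i \<le> \<bar>v2 i\<bar>" by auto
  moreover have "x i \<ge> v1 i + s" "- x i \<ge> - v2 i + s" using h1 h2 v1 v2 pe pe' by auto
  ultimately show ?thesis using s by linarith
qed

lemma core_ne: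
  assumes d0: "d > 0" and fd: "full_dim d P"
  shows "fine_adjoint d P (fine_number d P) \<noteq> {}"
proof -
  define B where "B = PiE UNIV (\<lambda>i. {(if i < d then - (\<Sum>v\<in>V. \<bar>v i\<bar>) else 0) ..
                                     (if i < d then (\<Sum>v\<in>V. \<bar>v i\<bar>) else 0)})"
  have cB: "compact B" unfolding B_def by (rule compact_box)
  have inB: "x \<in> B" if "x \<in> fine_adjoint d P s" "s \<ge> 0" for x s
  proof -
    have "x \<in> Rd d" using that by (auto simp: fine_adjoint_def)
    moreover have "\<And>i. i < d \<Longrightarrow> - (\<Sum>v\<in>V. \<bar>v i\<bar>) \<le> x i \<and> x i \<le> (\<Sum>v\<in>V. \<bar>v i\<bar>)"
      using adj_box[OF that] by (simp add: abs_le_iff) (meson minus_le_iff)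
    ultimately show ?thesis unfolding B_def Rd_def by auto
  qed
  define F where "F = fine_adjoint d P ` Sset d P"
  have "B \<inter> \<Inter>F \<noteq> {}"
  proof (rule compact_imp_fip[OF cB])
    show "\<And>T. T \<in> F \<Longrightarrow> closed T" unfolding F_def using closed_adj by auto
  next
    fix F' assume F': "finite F'" "F' \<subseteq> F"
    then obtain S' where S': "finite S'" "S' \<subseteq> Sset d P" "F' = fine_adjoint d P ` S'"
      unfolding F_def by (meson finite_subset_image)
    show "B \<inter> \<Inter>F' \<noteq> {}"
    proof (cases "S' = {}")
      case True
      have "(\<lambda>i. 0) \<in> B" unfolding B_def by auto
      then show ?thesis using True S' by auto
    next
      case False
      have "Max S' \<in> Sset d P" using Max_in[OF S'(1) False] S'(2) by auto
      then obtain x where x: "x \<in> fine_adjoint d P (Max S')" "Max S' > 0" by (auto simp: Sset_def)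
      have "x \<in> \<Inter>F'" using S' False x adj_mono by auto
      moreover have "x \<in> B" using inB x by auto
      ultimately show ?thesis by auto
    qed
  qed
  then obtain x where x: "\<forall>s\<in>Sset d P. x \<in> fine_adjoint d P s" unfolding F_def by auto
  have Sne: "Sset d P \<noteq> {}" using Sset_ne[OF fd] by auto
  have "x \<in> fine_adjoint d P (fine_number d P)"
    unfolding fine_adjoint_def
  proof (intro CollectI conjI ballI impI)
    show "x \<in> Rd d" using x Sne by (auto simp: fine_adjoint_def)
    fix a assume a: "a \<in> dualZd d" "\<exists>i<d. a i \<noteq> 0"
    have "\<forall>s\<in>Sset d P. s \<le> pairing d a x - hP d P a"
    proof
      fix s assume "s \<in> Sset d P"
      then have "hP d P a + s \<le> pairing d a x" using x a unfolding fine_adjoint_def by blast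
      then show "s \<le> pairing d a x - hP d P a" by simp
    qed
    then have "Sup (Sset d P) \<le> pairing d a x - hP d P a" using Sne by (intro cSup_least) auto
    then show "hP d P a + fine_number d P \<le> pairing d a x" by (simp add: fine_number_Sset)
  qed
  then show ?thesis by auto
qed

end

definition norm1 :: "nat \<Rightarrow> (nat \<Rightarrow> int) \<Rightarrow> real" where
  "norm1 d a = (\<Sum>i<d. \<bar>real_of_int (a i)\<bar>)"

context lp begin

lemma interior_bound:
  assumes s: "s > 0"
    and hx: "\<forall>a\<in>dualZd d. (\<exists>i<d. a i \<noteq> 0) \<longrightarrow> pairing d a x0 \<ge> hP d P a + s"
  shows "\<exists>\<delta>>0. \<forall>a\<in>dualZd d. pairing d a x0 - hP d P a \<ge> \<delta> * norm1 d a"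
proof (rule ccontr)
  assume contra: "\<not> ?thesis"
  define D where "D = (\<Sum>v\<in>V. \<Sum>i<d. \<bar>x0 i - v i\<bar>)"
  have D0: "D \<ge> 0" unfolding D_def by (auto intro!: sum_nonneg)
  define N :: nat where "N = nat \<lceil>2 * D / s\<rceil> + d + 1"
  have N0: "N > 0" and Nd: "real N > real d" unfolding N_def by auto
  have ND: "D / N < s / 2"
  proof -
    have "2 * D / s < real N" unfolding N_def by linarith
    then have "2 * D < real N * s" using s by (simp add: field_simps)
    then show ?thesis using N0 by (simp add: field_simps)
  qed
  define \<delta> where "\<delta> = s / (2 * real (N ^ d))"
  have \<delta>0: "\<delta> > 0" unfolding \<delta>_def using s N0 by simp
  then obtain a where a: "a \<in> dualZd d" and aless: "pairing d a x0 - hP d P a < \<delta> * norm1 d a"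
    using contra by (auto simp: not_le)
  define L where "L = norm1 d a"
  have L0: "L \<ge> 0" unfolding L_def norm1_def by (auto intro!: sum_nonneg)
  have "L \<noteq> 0"
  proof
    assume "L = 0"
    then have "\<forall>i\<in>{..<d}. \<bar>real_of_int (a i)\<bar> = 0" unfolding L_def norm1_def
      by (subst sum_nonneg_eq_0_iff[symmetric]) auto
    then have "\<forall>i<d. a i = 0" by auto
    then have pz: "pairing d a y = 0" for y unfolding pairing_def by simp
    then have "hP d P a = 0" using hP_attained[OF fin ne, of d a] by auto
    then show False using aless pz \<open>L = 0\<close> by (simp add: L_def)
  qed
  then have Lp: "L > 0" using L0 by simp
  define u where "u = (\<lambda>i. real_of_int (a i) / L)"
  obtain q p where q: "0 < q" "q \<le> int (N ^ d)" and pq: "\<And>i. i < d \<Longrightarrow> \<bar>of_int q * u i - of_int (p i)\<bar> < 1 / N"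
    using Dirichlet_approx_simult[OF N0, where \<theta>=u and n=d] by blast
  define p' where "p' = (\<lambda>i. if i < d then p i else 0)"
  have p'Z: "p' \<in> dualZd d" unfolding p'_def dualZd_def by auto
  have p'nz: "\<exists>i<d. p' i \<noteq> 0"
  proof (rule ccontr)
    assume "\<not> ?thesis"
    then have "\<forall>i<d. p i = 0" unfolding p'_def by auto
    then have "\<forall>i<d. \<bar>of_int q * u i\<bar> < 1 / N" using pq by auto
    then have "(\<Sum>i<d. \<bar>of_int q * u i\<bar>) \<le> (\<Sum>i<d. 1 / real N)" by (intro sum_mono) (auto intro: less_imp_le)
    also have "\<dots> = real d / N" by simp
    also have "\<dots> < 1" using Nd N0 by simp
    finally have lt: "(\<Sum>i<d. \<bar>of_int q * u i\<bar>) < 1" .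
    have "(\<Sum>i<d. \<bar>of_int q * u i\<bar>) = (\<Sum>i<d. (of_int q / L) * \<bar>real_of_int (a i)\<bar>)"
      by (rule sum.cong) (use q(1) Lp in \<open>auto simp: u_def abs_mult\<close>)
    also have "\<dots> = of_int q / L * (\<Sum>i<d. \<bar>real_of_int (a i)\<bar>)"
      by (simp only: sum_distrib_left)
    also have "\<dots> = of_int q / L * L" by (simp only: L_def norm1_def)
    also have "\<dots> = of_int q" using Lp by simp
    finally show False using lt q(1) by simp
  qed
  have hp: "pairing d p' x0 \<ge> hP d P p' + s" using hx p'Z p'nz by blast
  obtain v where v: "v \<in> V" "hP d P p' = pairing d p' v" using hP_attained[OF fin ne] by blast
  have split: "pairing d p' x0 - pairing d p' v =
     (\<Sum>i<d. (of_int q * u i) * (x0 i - v i)) + (\<Sum>i<d. (of_int (p i) - of_int q * u i) * (x0 i - v i))"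
    unfolding pairing_def p'_def by (simp add: sum.distrib[symmetric] sum_subtractf[symmetric] algebra_simps)
  have first: "(\<Sum>i<d. (of_int q * u i) * (x0 i - v i)) = of_int q / L * (pairing d a x0 - pairing d a v)"
  proof -
    have "(\<Sum>i<d. (of_int q * u i) * (x0 i - v i)) =
        (\<Sum>i<d. (of_int q / L) * (real_of_int (a i) * x0 i - real_of_int (a i) * v i))"
      by (rule sum.cong) (auto simp: u_def algebra_simps diff_divide_distrib)
    also have "\<dots> = of_int q / L * ((\<Sum>i<d. real_of_int (a i) * x0 i) - (\<Sum>i<d. real_of_int (a i) * v i))"
      by (simp only: sum_distrib_left[symmetric] sum_subtractf)
    finally show ?thesis unfolding pairing_def .
  qed
  have "pairing d a x0 - pairing d a v \<le> pairing d a x0 - hP d P a" using hP_le[OF fin v(1)] by simp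
  also have "\<dots> < \<delta> * L" using aless L_def by simp
  finally have "of_int q / L * (pairing d a x0 - pairing d a v) < of_int q / L * (\<delta> * L)"
    using q(1) Lp by (intro mult_strict_left_mono) auto
  also have "\<dots> = of_int q * \<delta>" using Lp by simp
  also have "\<dots> \<le> real (N ^ d) * \<delta>"
  proof -
    have "real_of_int q \<le> real_of_int (int (N^d))" using q(2) of_int_le_iff by blast
    then have "real_of_int q \<le> real (N ^ d)" by simp
    then show ?thesis using \<delta>0 by (intro mult_right_mono) auto
  qed
  also have "\<dots> = s / 2" unfolding \<delta>_def using N0 by simp
  finally have f1: "(\<Sum>i<d. (of_int q * u i) * (x0 i - v i)) < s / 2" using first by simp
  have "(\<Sum>i<d. (of_int (p i) - of_int q * u i) * (x0 i - v i)) \<le> (\<Sum>i<d. (1 / N) * \<bar>x0 i - v i\<bar>)"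
  proof (rule sum_mono)
    fix i assume "i \<in> {..<d}"
    then have "\<bar>of_int (p i) - of_int q * u i\<bar> \<le> 1 / N" using pq[of i] by (simp add: abs_minus_commute)
    then have "\<bar>(of_int (p i) - of_int q * u i) * (x0 i - v i)\<bar> \<le> (1 / N) * \<bar>x0 i - v i\<bar>"
      unfolding abs_mult by (rule mult_right_mono) auto
    then show "(of_int (p i) - of_int q * u i) * (x0 i - v i) \<le> (1 / N) * \<bar>x0 i - v i\<bar>" by simp
  qed
  also have "\<dots> = (1 / N) * (\<Sum>i<d. \<bar>x0 i - v i\<bar>)" by (simp add: sum_distrib_left)
  also have "\<dots> \<le> (1 / N) * D" unfolding D_def using v fin
    by (intro mult_left_mono member_le_sum[where f = "\<lambda>v. \<Sum>i<d. \<bar>x0 i - v i\<bar>"]) (auto intro!: sum_nonneg)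
  also have "\<dots> < s / 2" using ND by simp
  finally have f2: "(\<Sum>i<d. (of_int (p i) - of_int q * u i) * (x0 i - v i)) < s / 2" .
  show False using split f1 f2 hp v by linarith
qed

end

lemma sq_expand:
  fixes c b :: "nat \<Rightarrow> real"
  shows "(\<Sum>i<d. ((1-t) * c i + t * b i)^2) =
    (1-t)^2 * (\<Sum>i<d. (c i)^2) + 2 * t * (1-t) * (\<Sum>i<d. b i * c i) + t^2 * (\<Sum>i<d. (b i)^2)"
proof -
  have "(\<Sum>i<d. ((1-t) * c i + t * b i)^2) =
     (\<Sum>i<d. (1-t)^2 * (c i)^2 + 2 * t * (1-t) * (b i * c i) + t^2 * (b i)^2)"
    by (rule sum.cong) (auto simp: power2_eq_square algebra_simps)
  also have "\<dots> = (1-t)^2 * (\<Sum>i<d. (c i)^2) + 2 * t * (1-t) * (\<Sum>i<d. b i * c i) + t^2 * (\<Sum>i<d. (b i)^2)"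
    by (simp add: sum.distrib sum_distrib_left)
  finally show ?thesis .
qed

lemma gordan:
  fixes T :: "(nat \<Rightarrow> int) set"
  assumes finT: "finite T"
  shows "(\<exists>w::nat\<Rightarrow>real. (\<forall>i\<ge>d. w i = 0) \<and> (\<forall>a\<in>T. (\<Sum>i<d. real_of_int (a i) * w i) > 0)) \<or>
         (\<exists>l. (\<forall>a\<in>T. l a \<ge> 0) \<and> sum l T = 1 \<and> (\<forall>i<d. (\<Sum>a\<in>T. l a * real_of_int (a i)) = 0))"
proof (cases "T = {}")
  case True
  then show ?thesis by (intro disjI1 exI[of _ "\<lambda>i. 0"]) auto
next
  case False
  then obtain a0 where a0: "a0 \<in> T" by auto
  define \<Delta> where "\<Delta> = PiE UNIV (\<lambda>a. {0 .. (if a \<in> T then 1 else 0::real)}) \<inter> {l. sum l T = 1}"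
  have "closed {l::(nat\<Rightarrow>int)\<Rightarrow>real. sum l T = 1}"
    by (intro closed_Collect_eq continuous_intros continuous_on_product_coordinates)
  then have cD: "compact \<Delta>" unfolding \<Delta>_def using compact_box[of "\<lambda>_. 0"]
    by (intro compact_Int_closed) auto
  have inD: "l \<in> \<Delta>" if "\<forall>a\<in>T. l a \<ge> 0" "\<forall>a. a \<notin> T \<longrightarrow> l a = 0" "sum l T = 1" for l
  proof -
    have "l a \<le> 1" if "a \<in> T" for a
    proof -
      have "l a \<le> sum l T" using that finT \<open>\<forall>a\<in>T. l a \<ge> 0\<close> by (intro member_le_sum) auto
      then show ?thesis using \<open>sum l T = 1\<close> by simp
    qed
    then show ?thesis using that unfolding \<Delta>_def by auto
  qed
  have Dprops: "\<forall>a\<in>T. l a \<ge> 0" "sum l T = 1" if "l \<in> \<Delta>" for l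
    using that unfolding \<Delta>_def by auto
  define cc where "cc = (\<lambda>l i. \<Sum>a\<in>T. l a * real_of_int (a i))"
  define f where "f = (\<lambda>l. \<Sum>i<d. (cc l i)^2)"
  have contf: "continuous_on \<Delta> f" unfolding f_def cc_def
    by (intro continuous_intros continuous_on_product_coordinates continuous_on_subset[OF continuous_on_product_coordinates]) auto
  have Dne: "\<Delta> \<noteq> {}"
  proof -
    have "(\<lambda>a. if a = a0 then 1 else 0) \<in> \<Delta>" using a0 finT by (intro inD) auto
    then show ?thesis by auto
  qed
  obtain l where lD: "l \<in> \<Delta>" and lmin: "\<forall>l'\<in>\<Delta>. f l \<le> f l'"
    using continuous_attains_inf[OF cD Dne contf] by blast
  show ?thesis
  proof (cases "\<forall>i<d. cc l i = 0")
    case True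
    then show ?thesis using Dprops[OF lD] unfolding cc_def by blast
  next
    case False
    define A where "A = (\<Sum>i<d. (cc l i)^2)"
    have A0: "A > 0"
    proof -
      obtain i where "i < d" "cc l i \<noteq> 0" using False by auto
      then have "(cc l i)^2 \<le> A" unfolding A_def by (intro member_le_sum) auto
      moreover have "(cc l i)^2 > 0" using \<open>cc l i \<noteq> 0\<close> by simp
      ultimately show ?thesis by linarith
    qed
    have pos: "(\<Sum>i<d. real_of_int (b i) * cc l i) > 0" if bT: "b \<in> T" for b
    proof (rule ccontr)
      assume "\<not> ?thesis"
      then have B0: "(\<Sum>i<d. real_of_int (b i) * cc l i) \<le> 0" by simp
      define C where "C = (\<Sum>i<d. (real_of_int (b i))^2)"
      have C0: "C \<ge> 0" unfolding C_def by (auto intro: sum_nonneg)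
      define t where "t = A / (A + C)"
      have t0: "t > 0" and t1: "t \<le> 1" unfolding t_def using A0 C0 by auto
      define l' where "l' = (\<lambda>a. (1 - t) * l a + t * (if a = b then 1 else 0))"
      have lT: "\<forall>a. a \<notin> T \<longrightarrow> l a = 0"
      proof (intro allI impI)
        fix a assume "a \<notin> T"
        have "l \<in> (\<Pi>\<^sub>E a\<in>UNIV. {0..if a \<in> T then 1 else (0::real)})" using lD unfolding \<Delta>_def by blast
        then have "l a \<in> {0..if a \<in> T then 1 else (0::real)}" by (rule PiE_mem) simp
        then show "l a = 0" using \<open>a \<notin> T\<close> by simp
      qed
      have "l' \<in> \<Delta>"
      proof (rule inD)
        show "\<forall>a\<in>T. 0 \<le> l' a" using Dprops[OF lD] t0 t1 unfolding l'_def by auto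
        show "\<forall>a. a \<notin> T \<longrightarrow> l' a = 0" using lT bT unfolding l'_def by auto
        have "sum l' T = (1 - t) * sum l T + t * (\<Sum>a\<in>T. if a = b then 1 else 0)"
          unfolding l'_def by (simp add: sum.distrib sum_distrib_left)
        then show "sum l' T = 1" using Dprops[OF lD] bT finT by simp
      qed
      then have fle: "f l \<le> f l'" using lmin by auto
      have ccl': "cc l' i = (1 - t) * cc l i + t * real_of_int (b i)" for i
      proof -
        have "cc l' i = (\<Sum>a\<in>T. (1 - t) * (l a * real_of_int (a i)) + t * (if a = b then real_of_int (b i) else 0))"
          unfolding cc_def l'_def by (rule sum.cong) (auto simp: algebra_simps)
        also have "\<dots> = (1 - t) * cc l i + t * real_of_int (b i)"
          using bT finT by (simp add: sum.distrib sum_distrib_left[symmetric] cc_def)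
        finally show ?thesis .
      qed
      have "f l' = (1-t)^2 * A + 2 * t * (1-t) * (\<Sum>i<d. real_of_int (b i) * cc l i) + t^2 * C"
        unfolding f_def ccl' A_def C_def by (rule sq_expand)
      also have "\<dots> \<le> (1-t)^2 * A + t^2 * C"
        using B0 t0 t1 by (simp add: mult_nonneg_nonpos)
      also have "\<dots> = A - t * (2 * A - t * (A + C))" by (simp add: power2_eq_square algebra_simps)
      also have "t * (A + C) = A" unfolding t_def using A0 C0 by simp
      finally have "f l' \<le> A - t * A" by simp
      moreover have "t * A > 0" using t0 A0 by simp
      ultimately have "f l' < f l" unfolding f_def A_def by simp
      then show False using fle by simp
    qed
    show ?thesis
    proof (intro disjI1 exI[of _ "\<lambda>i. if i < d then cc l i else 0"] conjI allI impI ballI)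
      fix b assume "b \<in> T"
      have "(\<Sum>i<d. real_of_int (b i) * (if i < d then cc l i else 0)) = (\<Sum>i<d. real_of_int (b i) * cc l i)"
        by (rule sum.cong) auto
      then show "0 < (\<Sum>i<d. real_of_int (b i) * (if i < d then cc l i else 0))" using pos[OF \<open>b \<in> T\<close>] by simp
    qed auto
  qed
qed


lemma int_kernel:
  fixes u :: "nat \<Rightarrow> real"
  shows "\<forall>a\<in>T. (\<Sum>i<m. real_of_int (a i) * u i) = 0 \<Longrightarrow> \<exists>i<m. u i \<noteq> 0 \<Longrightarrow>
    \<exists>v::nat\<Rightarrow>int. (\<forall>a\<in>T. (\<Sum>i<m. a i * v i) = 0) \<and> (\<exists>i<m. v i \<noteq> 0)"
proof (induction m arbitrary: T u)
  case 0
  then show ?case by auto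
next
  case (Suc m)
  show ?case
  proof (cases "\<forall>a\<in>T. a m = 0")
    case True
    show ?thesis
    proof (intro exI[of _ "\<lambda>i. if i = m then 1 else 0"] conjI ballI)
      fix a assume "a \<in> T"
      have "(\<Sum>i<Suc m. a i * (if i = m then 1 else 0)) = (\<Sum>i<Suc m. if i = m then a m else 0)"
        by (rule sum.cong) auto
      then show "(\<Sum>i<Suc m. a i * (if i = m then 1 else 0)) = 0" using True \<open>a \<in> T\<close> by simp
    qed auto
  next
    case False
    then obtain a0 where a0: "a0 \<in> T" "a0 m \<noteq> 0" by auto
    define c where "c = a0 m"
    define T' where "T' = (\<lambda>a. (\<lambda>i. c * a i - a m * a0 i)) ` T"
    have hu: "\<forall>a\<in>T'. (\<Sum>i<m. real_of_int (a i) * u i) = 0"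
    proof
      fix a' assume "a' \<in> T'"
      then obtain a where a: "a \<in> T" "a' = (\<lambda>i. c * a i - a m * a0 i)" unfolding T'_def by auto
      have e1: "(\<Sum>i<m. real_of_int (a i) * u i) = - (real_of_int (a m) * u m)"
        using Suc.prems(1) a(1) by (simp add: eq_neg_iff_add_eq_0 add.commute)
      have e2: "(\<Sum>i<m. real_of_int (a0 i) * u i) = - (real_of_int c * u m)"
        using Suc.prems(1) a0(1) by (simp add: eq_neg_iff_add_eq_0 add.commute c_def)
      have "(\<Sum>i<m. real_of_int (a' i) * u i) =
          real_of_int c * (\<Sum>i<m. real_of_int (a i) * u i) - real_of_int (a m) * (\<Sum>i<m. real_of_int (a0 i) * u i)"
        unfolding a(2) by (simp add: sum_distrib_left sum_subtractf[symmetric] algebra_simps)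
      also have "\<dots> = 0" unfolding e1 e2 by (simp add: algebra_simps)
      finally show "(\<Sum>i<m. real_of_int (a' i) * u i) = 0" .
    qed
    have "\<exists>i<m. u i \<noteq> 0"
    proof (rule ccontr)
      assume "\<not> ?thesis"
      then have z: "\<forall>i<m. u i = 0" by auto
      have "(\<Sum>i<Suc m. real_of_int (a0 i) * u i) = 0" using Suc.prems(1) a0(1) by auto
      then have "real_of_int (a0 m) * u m = 0" using z by simp
      then have "u m = 0" using a0(2) by simp
      then show False using Suc.prems(2) z less_Suc_eq by auto
    qed
    then obtain v' where v': "\<forall>a\<in>T'. (\<Sum>i<m. a i * v' i) = 0" "\<exists>i<m. v' i \<noteq> 0"
      using Suc.IH[OF hu] by blast
    define v where "v = (\<lambda>i. if i < m then c * v' i else if i = m then - (\<Sum>j<m. a0 j * v' j) else 0)"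
    show ?thesis
    proof (intro exI[of _ v] conjI ballI)
      fix a assume a: "a \<in> T"
      have "(\<lambda>i. c * a i - a m * a0 i) \<in> T'" using a unfolding T'_def by auto
      then have z: "(\<Sum>i<m. (c * a i - a m * a0 i) * v' i) = 0" using v'(1) by auto
      have "(\<Sum>i<Suc m. a i * v i) = (\<Sum>i<m. a i * (c * v' i)) - a m * (\<Sum>j<m. a0 j * v' j)"
        unfolding v_def by simp
      also have "\<dots> = (\<Sum>i<m. (c * a i - a m * a0 i) * v' i)"
        by (simp add: sum_distrib_left sum_subtractf algebra_simps)
      finally show "(\<Sum>i<Suc m. a i * v i) = 0" using z by simp
    next
      obtain i where "i < m" "v' i \<noteq> 0" using v'(2) by auto
      then show "\<exists>i<Suc m. v i \<noteq> 0" using a0(2) by (intro exI[of _ i]) (auto simp: v_def c_def)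
    qed
  qed
qed


definition mmul :: "nat \<Rightarrow> (nat \<Rightarrow> nat \<Rightarrow> int) \<Rightarrow> (nat \<Rightarrow> nat \<Rightarrow> int) \<Rightarrow> nat \<Rightarrow> nat \<Rightarrow> int" where
  "mmul d A B = (\<lambda>i k. \<Sum>j<d. A i j * B j k)"

definition mv :: "nat \<Rightarrow> (nat \<Rightarrow> nat \<Rightarrow> int) \<Rightarrow> (nat \<Rightarrow> int) \<Rightarrow> nat \<Rightarrow> int" where
  "mv d A v = (\<lambda>i. \<Sum>j<d. A i j * v j)"

definition idm :: "nat \<Rightarrow> nat \<Rightarrow> int" where
  "idm = (\<lambda>i k. if i = k then 1 else 0)"

definition unimod :: "nat \<Rightarrow> (nat \<Rightarrow> nat \<Rightarrow> int) \<Rightarrow> (nat \<Rightarrow> nat \<Rightarrow> int) \<Rightarrow> bool" where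
  "unimod d M N \<longleftrightarrow> (\<forall>i<d. \<forall>k<d. mmul d M N i k = idm i k) \<and> (\<forall>i<d. \<forall>k<d. mmul d N M i k = idm i k)"

lemma mmul_assoc: "mmul d (mmul d A B) C = mmul d A (mmul d B C)"
  unfolding mmul_def by (auto simp: sum_distrib_left sum_distrib_right mult.assoc intro!: ext sum.swap)

lemma mv_mmul: "mv d (mmul d A B) v = mv d A (mv d B v)"
  unfolding mmul_def mv_def by (auto simp: sum_distrib_left sum_distrib_right mult.assoc intro!: ext sum.swap)

lemma mmul_idl: assumes "\<forall>i<d. \<forall>k<d. B i k = idm i k" "i < d" shows "mmul d B X i k = X i k"
proof -
  have "mmul d B X i k = (\<Sum>j<d. if j = i then X i k else 0)"
    unfolding mmul_def using assms by (intro sum.cong) (auto simp: idm_def)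
  then show ?thesis using assms by simp
qed

lemma mv_idl: assumes "\<forall>i<d. \<forall>k<d. B i k = idm i k" "i < d" shows "mv d B X i = X i"
proof -
  have "mv d B X i = (\<Sum>j<d. if j = i then X i else 0)"
    unfolding mv_def using assms by (intro sum.cong) (auto simp: idm_def)
  then show ?thesis using assms by simp
qed

lemma unimod_id: "unimod d idm idm"
  unfolding unimod_def using mmul_idl[of d idm] by auto

lemma unimod_comp:
  assumes "unimod d M1 N1" "unimod d M2 N2"
  shows "unimod d (mmul d M2 M1) (mmul d N1 N2)"
proof -
  have a: "mmul d (mmul d M2 M1) (mmul d N1 N2) i k = idm i k" if "i < d" "k < d" for i k
  proof -
    have "mmul d (mmul d M2 M1) (mmul d N1 N2) i k = mmul d M2 (mmul d (mmul d M1 N1) N2) i k"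
      by (simp add: mmul_assoc)
    also have "\<dots> = mmul d M2 N2 i k"
      unfolding mmul_def[of d M2] using assms(1) mmul_idl[of d "mmul d M1 N1" _ N2]
      by (intro sum.cong) (auto simp: unimod_def)
    also have "\<dots> = idm i k" using assms(2) that by (auto simp: unimod_def)
    finally show ?thesis .
  qed
  have b: "mmul d (mmul d N1 N2) (mmul d M2 M1) i k = idm i k" if "i < d" "k < d" for i k
  proof -
    have "mmul d (mmul d N1 N2) (mmul d M2 M1) i k = mmul d N1 (mmul d (mmul d N2 M2) M1) i k"
      by (simp add: mmul_assoc)
    also have "\<dots> = mmul d N1 M1 i k"
      unfolding mmul_def[of d N1] using assms(2) mmul_idl[of d "mmul d N2 M2" _ M1]
      by (intro sum.cong) (auto simp: unimod_def)
    also have "\<dots> = idm i k" using assms(1) that by (auto simp: unimod_def)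
    finally show ?thesis .
  qed
  show ?thesis using a b unfolding unimod_def by auto
qed

definition sh :: "nat \<Rightarrow> nat \<Rightarrow> int \<Rightarrow> nat \<Rightarrow> nat \<Rightarrow> int" where
  "sh i j k = (\<lambda>r c. idm r c + (if r = i \<and> c = j then k else 0))"

lemma sh_mul:
  assumes "i \<noteq> j" "i < d" "j < d" "r < d"
  shows "mmul d (sh i j k) (sh i j k') r c = idm r c + (if r = i \<and> c = j then k + k' else 0)"
proof -
  have "mmul d (sh i j k) (sh i j k') r c =
     (\<Sum>l<d. (if l = r then idm r c else 0) + (if l = r then (if l = i \<and> c = j then k' else 0) else 0)
        + (if l = j then (if r = i then k * idm j c else 0) else 0))"
    unfolding mmul_def sh_def using assms by (intro sum.cong) (auto simp: idm_def)
  also have "\<dots> = idm r c + (if r = i \<and> c = j then k' else 0) + (if r = i then k * idm j c else 0)"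
    using assms by (simp add: sum.distrib)
  finally show ?thesis by (auto simp: idm_def)
qed

lemma unimod_sh:
  assumes "i \<noteq> j" "i < d" "j < d"
  shows "unimod d (sh i j k) (sh i j (-k))"
  unfolding unimod_def using sh_mul[OF assms] by auto

lemma mv_sh:
  assumes "i \<noteq> j" "i < d" "j < d" "r < d"
  shows "mv d (sh i j k) v r = (v(i := v i + k * v j)) r"
proof -
  have "mv d (sh i j k) v r = (\<Sum>l<d. (if l = r then v r else 0) + (if l = j then (if r = i then k * v j else 0) else 0))"
    unfolding mv_def sh_def using assms by (intro sum.cong) (auto simp: idm_def)
  also have "\<dots> = v r + (if r = i then k * v j else 0)" using assms by (simp add: sum.distrib)
  finally show ?thesis by auto
qed

lemma abs_step1: fixes a b :: int assumes "\<bar>b\<bar> \<le> \<bar>a\<bar>"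
  shows "\<bar>a + (if (a > 0) = (b > 0) then -1 else 1) * b\<bar> = \<bar>a\<bar> - \<bar>b\<bar>"
proof (cases "(a > 0) = (b > 0)")
  case True
  then show ?thesis using assms by (simp add: abs_if) arith
next
  case False
  then show ?thesis using assms by (simp add: abs_if) arith
qed
lemma abs_step2: fixes a b :: int assumes "\<bar>b\<bar> \<le> \<bar>a\<bar>"
  shows "\<bar>a + (if (b > 0) = (a > 0) then -1 else 1) * b\<bar> = \<bar>a\<bar> - \<bar>b\<bar>"
  using abs_step1[OF assms] by (simp add: eq_commute)

definition meas :: "nat \<Rightarrow> (nat \<Rightarrow> int) \<Rightarrow> nat" where
  "meas e v = nat (2 * (\<Sum>r<e. \<bar>v r\<bar>) + \<bar>v e\<bar>)"

lemma sum_upd_abs: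
  fixes e i :: nat and v :: "nat \<Rightarrow> int"
  assumes "i < e"
  shows "(\<Sum>r<e. \<bar>(v(i := x)) r\<bar>) = (\<Sum>r<e. \<bar>v r\<bar>) - \<bar>v i\<bar> + \<bar>x\<bar>"
proof -
  have "(\<Sum>r<e. \<bar>(v(i := x)) r\<bar>) = \<bar>(v(i := x)) i\<bar> + (\<Sum>r\<in>{..<e}-{i}. \<bar>(v(i := x)) r\<bar>)"
    by (rule sum.remove) (use assms in auto)
  also have "(\<Sum>r\<in>{..<e}-{i}. \<bar>(v(i := x)) r\<bar>) = (\<Sum>r\<in>{..<e}-{i}. \<bar>v r\<bar>)"
    by (rule sum.cong) auto
  finally have "(\<Sum>r<e. \<bar>(v(i := x)) r\<bar>) = \<bar>x\<bar> + (\<Sum>r\<in>{..<e}-{i}. \<bar>v r\<bar>)" by simp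
  moreover have "(\<Sum>r<e. \<bar>v r\<bar>) = \<bar>v i\<bar> + (\<Sum>r\<in>{..<e}-{i}. \<bar>v r\<bar>)"
    using assms by (simp add: sum.remove[of "{..<e}" i])
  ultimately show ?thesis by simp
qed

lemma meas_cong: "\<forall>r<Suc e. v r = w r \<Longrightarrow> meas e v = meas e w"
  unfolding meas_def by (auto intro!: sum.cong arg_cong[where f = nat])

lemma reduce_unimod:
  "\<exists>M N. unimod (Suc e) M N \<and> (\<forall>i<e. mv (Suc e) M v i = 0)"
proof (induction "meas e v" arbitrary: v rule: less_induct)
  case less
  define d where "d = Suc e"
  have ed: "e < d" unfolding d_def by simp
  have step: "\<exists>M N. unimod d M N \<and> (\<forall>i<e. mv d M v i = 0)"
    if S: "unimod d S S'" and dec: "meas e (mv d S v) < meas e v" for S S'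
  proof -
    obtain M N where MN: "unimod d M N" "\<forall>i<e. mv d M (mv d S v) i = 0"
      using less(1)[OF dec] unfolding d_def by blast
    show ?thesis
      by (intro exI[of _ "mmul d M S"] exI[of _ "mmul d S' N"] conjI unimod_comp[OF S MN(1)])
         (use MN(2) in \<open>simp add: mv_mmul\<close>)
  qed
  show ?case
  proof (cases "\<forall>i<e. v i = 0")
    case True
    have "mv (Suc e) idm v i = v i" if "i < Suc e" for i using mv_idl[of "Suc e" idm i v] that by simp
    then show ?thesis using unimod_id True by (intro exI[of _ idm]) auto
  next
    case False
    then obtain i where i: "i < e" "v i \<noteq> 0" by auto
    have id: "i < d" using i ed by simp
    have vipos: "\<bar>v i\<bar> \<le> (\<Sum>r<e. \<bar>v r\<bar>)" by (rule member_le_sum) (use i in auto)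
    define S where "S = (if v e = 0 then mmul d (sh i e (-1)) (sh e i 1)
       else if \<bar>v i\<bar> \<ge> \<bar>v e\<bar> then sh i e (if (v i > 0) = (v e > 0) then -1 else 1)
       else sh e i (if (v i > 0) = (v e > 0) then -1 else 1))"
    define S' where "S' = (if v e = 0 then mmul d (sh e i (-1)) (sh i e 1)
       else if \<bar>v i\<bar> \<ge> \<bar>v e\<bar> then sh i e (- (if (v i > 0) = (v e > 0) then -1 else 1))
       else sh e i (- (if (v i > 0) = (v e > 0) then -1 else 1)))"
    have ie: "i \<noteq> e" "e \<noteq> i" using i by auto
    have uS: "unimod d S S'"
      unfolding S_def S'_def using unimod_comp[OF unimod_sh[OF ie(2) ed id, of 1] unimod_sh[OF ie(1) id ed, of "-1"]]
        unimod_sh[OF ie(1) id ed] unimod_sh[OF ie(2) ed id] by auto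
    have "meas e (mv d S v) < meas e v"
    proof (cases "v e = 0")
      case True
      have "\<forall>r<d. mv d S v r = (v(e := v i, i := 0)) r"
      proof (intro allI impI)
        fix r assume r: "r < d"
        have "mv d S v r = mv d (sh i e (-1)) (mv d (sh e i 1) v) r"
          using True by (simp add: S_def mv_mmul)
        also have "\<dots> = ((mv d (sh e i 1) v)(i := mv d (sh e i 1) v i + (-1) * mv d (sh e i 1) v e)) r"
          using mv_sh[OF ie(1) id ed r] by simp
        also have "\<dots> = (v(e := v i, i := 0)) r"
          using mv_sh[OF ie(2) ed id] id ed r True ie by auto
        finally show "mv d S v r = (v(e := v i, i := 0)) r" .
      qed
      then have "meas e (mv d S v) = meas e (v(e := v i, i := 0))" by (intro meas_cong) (simp add: d_def)
      also have "\<dots> = nat (2 * ((\<Sum>r<e. \<bar>v r\<bar>) - \<bar>v i\<bar>) + \<bar>v i\<bar>)"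
        unfolding meas_def using sum_upd_abs[OF i(1), of "v(e := v i)" 0] i ie
        by (simp add: fun_upd_other)
      finally show ?thesis unfolding meas_def using True i vipos by simp
    next
      case False
      note ve = False
      define \<sigma> :: int where "\<sigma> = (if (v i > 0) = (v e > 0) then -1 else 1)"
      show ?thesis
      proof (cases "\<bar>v i\<bar> \<ge> \<bar>v e\<bar>")
        case True
        have "\<forall>r<d. mv d S v r = (v(i := v i + \<sigma> * v e)) r"
          using mv_sh[OF ie(1) id ed] True ve by (auto simp: S_def \<sigma>_def)
        then have "meas e (mv d S v) = meas e (v(i := v i + \<sigma> * v e))" by (intro meas_cong) (simp add: d_def)
        also have "\<dots> = nat (2 * ((\<Sum>r<e. \<bar>v r\<bar>) - \<bar>v i\<bar> + \<bar>v i + \<sigma> * v e\<bar>) + \<bar>v e\<bar>)"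
          unfolding meas_def sum_upd_abs[OF i(1)] using ie by simp
        also have "\<bar>v i + \<sigma> * v e\<bar> = \<bar>v i\<bar> - \<bar>v e\<bar>"
          using abs_step1[OF True] unfolding \<sigma>_def .
        finally show ?thesis unfolding meas_def using ve vipos i(2)
          by (simp add: zless_nat_conj)
      next
        case False
        have "\<forall>r<d. mv d S v r = (v(e := v e + \<sigma> * v i)) r"
          using mv_sh[OF ie(2) ed id] False ve by (auto simp: S_def \<sigma>_def)
        then have "meas e (mv d S v) = meas e (v(e := v e + \<sigma> * v i))" by (intro meas_cong) (simp add: d_def)
        also have "\<dots> = nat (2 * (\<Sum>r<e. \<bar>v r\<bar>) + \<bar>v e + \<sigma> * v i\<bar>)"
          unfolding meas_def by simp
        also have "\<bar>v e + \<sigma> * v i\<bar> = \<bar>v e\<bar> - \<bar>v i\<bar>"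
          using abs_step2[of "v i" "v e"] False unfolding \<sigma>_def by linarith
        finally show ?thesis unfolding meas_def using ve vipos i(2)
          by (simp add: zless_nat_conj)
      qed
    qed
    then show ?thesis using step[OF uS] by (simp add: d_def)
  qed
qed


lemma finite_common_pos:
  fixes Q :: "'a \<Rightarrow> real \<Rightarrow> bool"
  assumes "finite F" "\<forall>a\<in>F. \<exists>e>0. \<forall>e'. 0 < e' \<and> e' \<le> e \<longrightarrow> Q a e'"
  shows "\<exists>e>0. \<forall>a\<in>F. \<forall>e'. 0 < e' \<and> e' \<le> e \<longrightarrow> Q a e'"
  using assms
proof (induction F rule: finite_induct)
  case empty
  then show ?case by (intro exI[of _ 1]) auto
next
  case (insert x F)
  then obtain e1 where e1: "e1 > 0" "\<forall>a\<in>F. \<forall>e'. 0 < e' \<and> e' \<le> e1 \<longrightarrow> Q a e'" by auto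
  obtain e2 where e2: "e2 > 0" "\<forall>e'. 0 < e' \<and> e' \<le> e2 \<longrightarrow> Q x e'" using insert.prems by auto
  show ?case using e1 e2 by (intro exI[of _ "min e1 e2"]) auto
qed

lemma abs_le_norm1: "i < d \<Longrightarrow> \<bar>real_of_int (a i)\<bar> \<le> norm1 d a"
  unfolding norm1_def by (rule member_le_sum) auto

lemma norm1_nonneg: "norm1 d a \<ge> 0"
  unfolding norm1_def by (auto intro: sum_nonneg)

lemma finite_dual_ball: "finite {a. a \<in> dualZd d \<and> norm1 d a \<le> K}"
proof -
  define k where "k = \<lceil>K\<rceil>"
  have "{a. a \<in> dualZd d \<and> norm1 d a \<le> K} \<subseteq>
      {f. \<forall>x. (x \<in> {..<d} \<longrightarrow> f x \<in> {-k..k}) \<and> (x \<notin> {..<d} \<longrightarrow> f x = 0)}"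
  proof
    fix a assume "a \<in> {a. a \<in> dualZd d \<and> norm1 d a \<le> K}"
    then have a: "a \<in> dualZd d" "norm1 d a \<le> K" by auto
    have "\<forall>x. (x \<in> {..<d} \<longrightarrow> a x \<in> {-k..k}) \<and> (x \<notin> {..<d} \<longrightarrow> a x = 0)"
    proof (intro allI conjI impI)
      fix x assume "x \<in> {..<d}"
      then have "\<bar>real_of_int (a x)\<bar> \<le> K" using abs_le_norm1[of x d a] a by simp
      then have "\<bar>a x\<bar> \<le> k" unfolding k_def by linarith
      then show "a x \<in> {-k..k}" by auto
    next
      fix x assume "x \<notin> {..<d}" then show "a x = 0" using a by (auto simp: dualZd_def)
    qed
    then show "a \<in> {f. \<forall>x. (x \<in> {..<d} \<longrightarrow> f x \<in> {-k..k}) \<and> (x \<notin> {..<d} \<longrightarrow> f x = 0)}" by simp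
  qed
  moreover have "finite {f. \<forall>x. (x \<in> {..<d} \<longrightarrow> f x \<in> {-k..k}) \<and> (x \<notin> {..<d} \<longrightarrow> f x = (0::int))}"
    by (rule finite_set_of_finite_funs) auto
  ultimately show ?thesis by (rule finite_subset)
qed

lemma pairing_add: "pairing d a (\<lambda>i. x i + t * w i) = pairing d a x + t * pairing d a w"
  unfolding pairing_def by (simp add: algebra_simps sum.distrib sum_distrib_left)

lemma pairing_mid: "pairing d a (\<lambda>i. (x i + y i) / 2) = (pairing d a x + pairing d a y) / 2"
  unfolding pairing_def by (simp add: algebra_simps sum.distrib sum_divide_distrib add_divide_distrib)

lemma pairing_bound: "\<bar>pairing d a w\<bar> \<le> norm1 d a * ((\<Sum>i<d. \<bar>w i\<bar>) + 1)"
proof -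
  have "\<bar>pairing d a w\<bar> \<le> (\<Sum>i<d. \<bar>real_of_int (a i)\<bar> * \<bar>w i\<bar>)"
    unfolding pairing_def by (rule order.trans[OF sum_abs]) (simp add: abs_mult)
  also have "\<dots> \<le> (\<Sum>i<d. \<bar>real_of_int (a i)\<bar> * ((\<Sum>i<d. \<bar>w i\<bar>) + 1))"
  proof (rule sum_mono)
    fix i assume "i \<in> {..<d}"
    then have "\<bar>w i\<bar> \<le> (\<Sum>i<d. \<bar>w i\<bar>)" by (intro member_le_sum) auto
    then show "\<bar>real_of_int (a i)\<bar> * \<bar>w i\<bar> \<le> \<bar>real_of_int (a i)\<bar> * ((\<Sum>i<d. \<bar>w i\<bar>) + 1)"
      by (intro mult_left_mono) auto
  qed
  also have "\<dots> = norm1 d a * ((\<Sum>i<d. \<bar>w i\<bar>) + 1)" unfolding norm1_def by (simp add: sum_distrib_right)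
  finally show ?thesis .
qed

context lp begin

lemma tight_comb:
  assumes d0: "d > 0" and fd: "full_dim d P"
    and x: "x \<in> fine_adjoint d P (fine_number d P)" and y: "y \<in> fine_adjoint d P (fine_number d P)"
    and xy: "x \<noteq> y"
  shows "\<exists>x0 T l v. x0 \<in> fine_adjoint d P (fine_number d P) \<and> finite T \<and>
     (\<forall>a\<in>T. a \<in> dualZd d \<and> (\<exists>i<d. a i \<noteq> 0) \<and> pairing d a x0 = hP d P a + fine_number d P) \<and>
     (\<forall>a\<in>T. l a \<ge> 0) \<and> sum l T = 1 \<and> (\<forall>i<d. (\<Sum>a\<in>T. l a * real_of_int (a i)) = 0) \<and>
     (\<exists>i<d. v i \<noteq> (0::int)) \<and> (\<forall>a\<in>T. (\<Sum>i<d. a i * v i) = 0)"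
proof -
  define n where "n = fine_number d P"
  have n0: "n > 0" unfolding n_def using fn_pos[OF d0 fd] .
  define x0 where "x0 = (\<lambda>i. (x i + y i) / 2)"
  have xR: "x \<in> Rd d" and yR: "y \<in> Rd d" using x y by (auto simp: fine_adjoint_def)
  have x0R: "x0 \<in> Rd d" using xR yR by (auto simp: Rd_def x0_def)
  have gx: "pairing d a x \<ge> hP d P a + n" if "a \<in> dualZd d" "\<exists>i<d. a i \<noteq> 0" for a
    using x that unfolding fine_adjoint_def n_def by blast
  have gy: "pairing d a y \<ge> hP d P a + n" if "a \<in> dualZd d" "\<exists>i<d. a i \<noteq> 0" for a
    using y that unfolding fine_adjoint_def n_def by blast
  have gx0: "pairing d a x0 \<ge> hP d P a + n" if "a \<in> dualZd d" "\<exists>i<d. a i \<noteq> 0" for a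
    using gx[OF that] gy[OF that] unfolding x0_def pairing_mid by simp
  have x0adj: "x0 \<in> fine_adjoint d P n" using x0R gx0 unfolding fine_adjoint_def by auto
  obtain \<delta> where \<delta>0: "\<delta> > 0" and \<delta>b: "\<forall>a\<in>dualZd d. pairing d a x0 - hP d P a \<ge> \<delta> * norm1 d a"
    using interior_bound[OF n0, of x0] gx0 by blast
  define T where "T = {a. a \<in> dualZd d \<and> (\<exists>i<d. a i \<noteq> 0) \<and> pairing d a x0 = hP d P a + n}"
  have finT: "finite T"
  proof (rule finite_subset[OF _ finite_dual_ball[of d "n / \<delta>"]])
    show "T \<subseteq> {a. a \<in> dualZd d \<and> norm1 d a \<le> n / \<delta>}"
    proof
      fix a assume "a \<in> T"
      then have "a \<in> dualZd d" "\<delta> * norm1 d a \<le> n" using \<delta>b unfolding T_def by auto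
      then show "a \<in> {a. a \<in> dualZd d \<and> norm1 d a \<le> n / \<delta>}" using \<delta>0 by (auto simp: field_simps)
    qed
  qed
  have orth: "(\<Sum>i<d. real_of_int (a i) * (y i - x i)) = 0" if "a \<in> T" for a
  proof -
    have a: "a \<in> dualZd d" "\<exists>i<d. a i \<noteq> 0" "pairing d a x0 = hP d P a + n" using that T_def by auto
    have m0: "(pairing d a x + pairing d a y) / 2 = hP d P a + n" using a(3) unfolding x0_def pairing_mid .
    have m: "pairing d a x + pairing d a y = 2 * hP d P a + 2 * n" using m0 by (simp add: field_simps)
    have "pairing d a x = hP d P a + n" using gx[OF a(1,2)] gy[OF a(1,2)] m by (intro antisym) linarith+
    moreover have "pairing d a y = hP d P a + n" using gx[OF a(1,2)] gy[OF a(1,2)] m by (intro antisym) linarith+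
    ultimately have "pairing d a y - pairing d a x = 0" by simp
    then show ?thesis unfolding pairing_def by (simp add: sum_subtractf[symmetric] algebra_simps)
  qed
  have "\<exists>i<d. y i - x i \<noteq> 0"
  proof (rule ccontr)
    assume "\<not> ?thesis"
    then have "\<forall>i<d. x i = y i" by auto
    moreover have "\<forall>i. d \<le> i \<longrightarrow> x i = y i" using xR yR unfolding Rd_def by auto
    ultimately have "\<forall>i. x i = y i" using not_le by blast
    then show False using xy by auto
  qed
  then obtain v where v: "\<forall>a\<in>T. (\<Sum>i<d. a i * v i) = 0" "\<exists>i<d. v i \<noteq> 0"
    using int_kernel[where T=T and m=d and u="\<lambda>i. y i - x i"] orth by blast
  have "\<not> (\<exists>w::nat\<Rightarrow>real. (\<forall>i\<ge>d. w i = 0) \<and> (\<forall>a\<in>T. (\<Sum>i<d. real_of_int (a i) * w i) > 0))"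
  proof
    assume "\<exists>w::nat\<Rightarrow>real. (\<forall>i\<ge>d. w i = 0) \<and> (\<forall>a\<in>T. (\<Sum>i<d. real_of_int (a i) * w i) > 0)"
    then obtain w :: "nat \<Rightarrow> real" where w0: "\<forall>i\<ge>d. w i = 0" and wpos: "\<forall>a\<in>T. pairing d a w > 0"
      unfolding pairing_def by blast
    define W where "W = (\<Sum>i<d. \<bar>w i\<bar>) + 1"
    have W0: "W > 0" unfolding W_def by (simp add: add_nonneg_pos sum_nonneg)
    have pw: "\<bar>pairing d a w\<bar> \<le> norm1 d a * W" for a unfolding W_def by (rule pairing_bound)
    define K where "K = 2 * (n + 1) / \<delta>"
    define F where "F = {a. a \<in> dualZd d \<and> norm1 d a \<le> K}"
    have finF: "finite F" unfolding F_def by (rule finite_dual_ball)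
    have "\<forall>a\<in>F. \<exists>e>0. \<forall>e'. 0 < e' \<and> e' \<le> e \<longrightarrow>
        ((\<exists>i<d. a i \<noteq> 0) \<longrightarrow> pairing d a x0 + e' * pairing d a w > hP d P a + n)"
    proof
      fix a assume aF: "a \<in> F"
      show "\<exists>e>0. \<forall>e'. 0 < e' \<and> e' \<le> e \<longrightarrow>
        ((\<exists>i<d. a i \<noteq> 0) \<longrightarrow> pairing d a x0 + e' * pairing d a w > hP d P a + n)"
      proof (cases "a \<in> T")
        case True
        then show ?thesis using wpos unfolding T_def by (intro exI[of _ 1]) auto
      next
        case False
        show ?thesis
        proof (cases "\<exists>i<d. a i \<noteq> 0")
          case nz: True
          have aZ: "a \<in> dualZd d" using aF F_def by auto
          define \<gamma> where "\<gamma> = pairing d a x0 - hP d P a - n"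
          have \<gamma>0: "\<gamma> > 0" using gx0[OF aZ nz] False aZ nz unfolding \<gamma>_def T_def by auto
          define e where "e = \<gamma> / (norm1 d a * W + 1)"
          have den: "norm1 d a * W + 1 > 0" using norm1_nonneg[of d a] W0 by (simp add: add_nonneg_pos)
          have e0: "e > 0" unfolding e_def using \<gamma>0 den by simp
          show ?thesis
          proof (intro exI[of _ e] conjI allI impI e0)
            fix e' assume e': "0 < e' \<and> e' \<le> e"
            have "\<bar>e' * pairing d a w\<bar> \<le> e * (norm1 d a * W)"
              using e' pw[of a] by (simp add: abs_mult) (meson abs_ge_zero mult_mono order.trans e0 less_imp_le)
            also have "\<dots> < e * (norm1 d a * W + 1)" using e0 by simp
            also have "\<dots> = \<gamma>" unfolding e_def using den by simp
            finally show "pairing d a x0 + e' * pairing d a w > hP d P a + n" unfolding \<gamma>_def by linarith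
          qed
        qed (auto intro: exI[of _ 1])
      qed
    qed
    from finite_common_pos[OF finF this] obtain e1 where e1: "e1 > 0"
      "\<forall>a\<in>F. \<forall>e'. 0 < e' \<and> e' \<le> e1 \<longrightarrow> ((\<exists>i<d. a i \<noteq> 0) \<longrightarrow> pairing d a x0 + e' * pairing d a w > hP d P a + n)"
      by blast
    define \<epsilon> where "\<epsilon> = min e1 (\<delta> / (2 * W))"
    have \<epsilon>0: "\<epsilon> > 0" unfolding \<epsilon>_def using e1 \<delta>0 W0 by simp
    define z where "z = (\<lambda>i. x0 i + \<epsilon> * w i)"
    have pz: "pairing d a z = pairing d a x0 + \<epsilon> * pairing d a w" for a unfolding z_def by (rule pairing_add)
    have zF: "pairing d a z > hP d P a + n" if "a \<in> F" "\<exists>i<d. a i \<noteq> 0" for a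
      using e1(2) that \<epsilon>0 pz by (auto simp: \<epsilon>_def)
    have zbig: "pairing d a z \<ge> hP d P a + n + 1" if "a \<in> dualZd d" "a \<notin> F" for a
    proof -
      have big: "norm1 d a > K" using that F_def by auto
      have "\<epsilon> * \<bar>pairing d a w\<bar> \<le> (\<delta> / (2 * W)) * (norm1 d a * W)"
        using pw[of a] \<epsilon>0 by (intro mult_mono) (auto simp: \<epsilon>_def)
      also have "\<dots> = \<delta> / 2 * norm1 d a" using W0 by simp
      finally have c1: "2 * (\<epsilon> * \<bar>pairing d a w\<bar>) \<le> \<delta> * norm1 d a" by simp
      have "\<epsilon> * (- \<bar>pairing d a w\<bar>) \<le> \<epsilon> * pairing d a w" using \<epsilon>0
        by (intro mult_left_mono) auto
      then have c2: "- (\<epsilon> * \<bar>pairing d a w\<bar>) \<le> \<epsilon> * pairing d a w" by simp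
      have c3: "pairing d a x0 - hP d P a \<ge> \<delta> * norm1 d a" using \<delta>b that by auto
      have "\<delta> * norm1 d a > \<delta> * K" using big \<delta>0 by simp
      moreover have "\<delta> * K = 2 * n + 2" unfolding K_def using \<delta>0 by simp
      ultimately have c4: "\<delta> * norm1 d a \<ge> 2 * n + 2" by simp
      show ?thesis using pz[of a] c1 c2 c3 c4 by linarith
    qed
    have "\<forall>a\<in>F. \<exists>e>0. \<forall>e'. 0 < e' \<and> e' \<le> e \<longrightarrow>
        ((\<exists>i<d. a i \<noteq> 0) \<longrightarrow> pairing d a z \<ge> hP d P a + n + e')"
    proof
      fix a assume aF: "a \<in> F"
      show "\<exists>e>0. \<forall>e'. 0 < e' \<and> e' \<le> e \<longrightarrow> ((\<exists>i<d. a i \<noteq> 0) \<longrightarrow> pairing d a z \<ge> hP d P a + n + e')"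
      proof (cases "\<exists>i<d. a i \<noteq> 0")
        case True
        then show ?thesis using zF[OF aF True]
          by (intro exI[of _ "pairing d a z - hP d P a - n"]) auto
      qed (auto intro: exI[of _ 1])
    qed
    from finite_common_pos[OF finF this] obtain \<eta>1 where \<eta>1: "\<eta>1 > 0"
      "\<forall>a\<in>F. \<forall>e'. 0 < e' \<and> e' \<le> \<eta>1 \<longrightarrow> ((\<exists>i<d. a i \<noteq> 0) \<longrightarrow> pairing d a z \<ge> hP d P a + n + e')"
      by blast
    define \<eta> where "\<eta> = min \<eta>1 1"
    have \<eta>0: "\<eta> > 0" unfolding \<eta>_def using \<eta>1 by simp
    have "z \<in> fine_adjoint d P (n + \<eta>)"
      unfolding fine_adjoint_def
    proof (intro CollectI conjI ballI impI)
      show "z \<in> Rd d" using x0R w0 unfolding z_def Rd_def by auto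
      fix a assume a: "a \<in> dualZd d" "\<exists>i<d. a i \<noteq> 0"
      show "hP d P a + (n + \<eta>) \<le> pairing d a z"
      proof (cases "a \<in> F")
        case True
        have "0 < min \<eta>1 1 \<and> min \<eta>1 1 \<le> \<eta>1" using \<eta>1(1) by simp
        then have "hP d P a + n + min \<eta>1 1 \<le> pairing d a z" using \<eta>1(2) True a(2) by blast
        then show ?thesis by (simp add: \<eta>_def)
      next
        case False
        then show ?thesis using zbig[OF a(1) False] by (simp add: \<eta>_def)
      qed
    qed
    then have "n + \<eta> \<in> Sset d P" using n0 \<eta>0 by (auto simp: Sset_def)
    then have "n + \<eta> \<le> n" using fn_upper[OF d0, of "n + \<eta>"] n_def by simp
    then show False using \<eta>0 by simp
  qed
  then obtain l where l: "\<forall>a\<in>T. l a \<ge> 0" "sum l T = 1" "\<forall>i<d. (\<Sum>a\<in>T. l a * real_of_int (a i)) = 0"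
    using gordan[OF finT, of d] by blast
  show ?thesis
    apply (rule exI[of _ x0], rule exI[of _ T], rule exI[of _ l], rule exI[of _ v])
    using x0adj finT l v unfolding n_def[symmetric] by (auto simp: T_def)
qed

end

definition pimap :: "nat \<Rightarrow> nat \<Rightarrow> (nat \<Rightarrow> nat \<Rightarrow> int) \<Rightarrow> (nat \<Rightarrow> real) \<Rightarrow> nat \<Rightarrow> real" where
  "pimap d e M x = (\<lambda>i. if i < e then (\<Sum>j<d. real_of_int (M i j) * x j) else 0)"

definition piT :: "nat \<Rightarrow> nat \<Rightarrow> (nat \<Rightarrow> nat \<Rightarrow> int) \<Rightarrow> (nat \<Rightarrow> int) \<Rightarrow> nat \<Rightarrow> int" where
  "piT d e M b = (\<lambda>j. if j < d then (\<Sum>i<e. b i * M i j) else 0)"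

lemma pairing_pi: "pairing e b (pimap d e M x) = pairing d (piT d e M b) x"
  unfolding pairing_def pimap_def piT_def
  by (simp add: sum_distrib_left sum_distrib_right sum.swap[of _ "{..<e}" "{..<d}"] mult.assoc of_int_sum)

lemma lin_pi: "lin e c (pimap d e M x) = lin d (\<lambda>j. \<Sum>i<e. c i * real_of_int (M i j)) x"
  unfolding lin_def pimap_def
  by (simp add: sum_distrib_left sum_distrib_right sum.swap[of _ "{..<e}" "{..<d}"] mult.assoc)

lemma mmul_real: "real_of_int (mmul d M N i k) = (\<Sum>j<d. real_of_int (M i j) * real_of_int (N j k))"
  unfolding mmul_def by simp

lemma inv_zero_real:
  fixes c :: "nat \<Rightarrow> real"
  assumes U: "unimod d M N" and ed: "e < d"
    and z: "\<forall>j<d. (\<Sum>i<e. c i * real_of_int (M i j)) = 0" and k: "k < e"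
  shows "c k = 0"
proof -
  have "0 = (\<Sum>j<d. (\<Sum>i<e. c i * real_of_int (M i j)) * real_of_int (N j k))" using z by simp
  also have "\<dots> = (\<Sum>i<e. c i * (\<Sum>j<d. real_of_int (M i j) * real_of_int (N j k)))"
    by (simp add: sum_distrib_left sum_distrib_right sum.swap[of _ "{..<e}" "{..<d}"] mult.assoc)
  also have "\<dots> = (\<Sum>i<e. if i = k then c k else 0)"
    using U ed k by (intro sum.cong) (auto simp: unimod_def mmul_real[symmetric] idm_def)
  also have "\<dots> = c k" using k by simp
  finally show ?thesis by simp
qed

lemma sum_T_pairing:
  "(\<Sum>a\<in>T. l a * pairing d a x) = (\<Sum>j<d. (\<Sum>a\<in>T. l a * real_of_int (a j)) * x j)"
  unfolding pairing_def
  by (simp add: sum_distrib_left sum_distrib_right sum.swap[of _ T "{..<d}"] mult.assoc)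

lemma part2:
  assumes d1: "d > 1" and lpP: "lattice_polytope d P0" and fd: "full_dim d P0"
    and ns: "\<not> (\<exists>x. fine_core d P0 = {x})"
  shows "\<exists>Q. lattice_polytope (d-1) Q \<and> full_dim (d-1) Q \<and> fine_number (d-1) Q = fine_number d P0"
proof -
  define e where "e = d - 1"
  have dS: "d = Suc e" and e0: "e > 0" and d0: "d > 0" and ed: "e < d" using d1 by (auto simp: e_def)
  obtain V where V: "finite V" "V \<noteq> {}" "V \<subseteq> Zd d" "P0 = conv V"
    using lpP unfolding lattice_polytope_def by auto
  interpret PP: lp d V using V by unfold_locales auto
  define n where "n = fine_number d P0"
  have n0: "n > 0" using PP.fn_pos[OF d0] fd V n_def by simp
  have cne: "fine_core d P0 \<noteq> {}" using PP.core_ne[OF d0] fd V by (simp add: fine_core_def)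
  then obtain x where x: "x \<in> fine_core d P0" by auto
  then obtain y where y: "y \<in> fine_core d P0" "y \<noteq> x" using ns by blast
  obtain x0 T l v where x0: "x0 \<in> fine_adjoint d P0 n" and finT: "finite T"
    and Tprop: "\<forall>a\<in>T. a \<in> dualZd d \<and> (\<exists>i<d. a i \<noteq> 0) \<and> pairing d a x0 = hP d P0 a + n"
    and l: "\<forall>a\<in>T. l a \<ge> 0" "sum l T = 1" "\<forall>i<d. (\<Sum>a\<in>T. l a * real_of_int (a i)) = 0"
    and v: "\<exists>i<d. v i \<noteq> (0::int)" "\<forall>a\<in>T. (\<Sum>i<d. a i * v i) = 0"
  proof -
    have fdP: "full_dim d (conv V)" using fd V by simp
    have xP: "x \<in> fine_adjoint d (conv V) (fine_number d (conv V))" using x V unfolding fine_core_def by simp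
    have yP: "y \<in> fine_adjoint d (conv V) (fine_number d (conv V))" using y V unfolding fine_core_def by simp
    show ?thesis using PP.tight_comb[OF d0 fdP xP yP y(2)[symmetric]] that
      unfolding V(4)[symmetric] n_def[symmetric] by blast
  qed
  obtain M N where U: "unimod d M N" and Mv: "\<forall>i<e. mv d M v i = 0"
    using reduce_unimod[of e v] dS by blast
  define c where "c = mv d M v e"
  have vN: "v k = N k e * c" if "k < d" for k
  proof -
    have "v k = mv d (mmul d N M) v k" using mv_idl[of d "mmul d N M" k v] U that by (simp add: unimod_def)
    also have "\<dots> = mv d N (mv d M v) k" by (simp add: mv_mmul)
    also have "\<dots> = (\<Sum>j<d. N k j * mv d M v j)" by (simp add: mv_def[of d N])
    also have "\<dots> = (\<Sum>j<d. if j = e then N k e * c else 0)"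
      using Mv dS by (intro sum.cong) (auto simp: less_Suc_eq c_def)
    also have "\<dots> = N k e * c" using ed by simp
    finally show ?thesis .
  qed
  have c0: "c \<noteq> 0" using v(1) vN by auto
  have aNe: "(\<Sum>k<d. a k * N k e) = 0" if "a \<in> T" for a
  proof -
    have "c * (\<Sum>k<d. a k * N k e) = (\<Sum>k<d. a k * v k)"
      by (simp add: sum_distrib_left vN algebra_simps)
    then show ?thesis using v(2) that c0 by simp
  qed
  define pi where "pi = pimap d e M"
  define W where "W = pi ` V"
  define Q where "Q = conv W"
  have Wfin: "finite W" "W \<noteq> {}" using V by (auto simp: W_def)
  have WZ: "W \<subseteq> Zd e"
  proof
    fix w assume "w \<in> W"
    then obtain u where u: "u \<in> V" "w = pi u" by (auto simp: W_def)
    then have "u \<in> Zd d" using V by auto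
    then show "w \<in> Zd e" unfolding u(2) pi_def pimap_def Zd_def Rd_def
      by (auto intro!: Ints_sum Ints_mult)
  qed
  interpret QQ: lp e W using Wfin WZ by unfold_locales auto
  have lpQ: "lattice_polytope e Q" unfolding lattice_polytope_def Q_def using Wfin WZ by auto
  have hQ: "hP e Q b = hP d P0 (piT d e M b)" for b
  proof -
    have "hP e Q b = Min (pairing e b ` W)" unfolding Q_def by (rule hP_min[OF Wfin])
    also have "pairing e b ` W = pairing d (piT d e M b) ` V"
      unfolding W_def pi_def by (auto simp: pairing_pi image_image)
    also have "Min (pairing d (piT d e M b) ` V) = hP d P0 (piT d e M b)"
      using hP_min[OF V(1,2)] V(4) by simp
    finally show ?thesis .
  qed
  have piTZ: "piT d e M b \<in> dualZd d" for b unfolding piT_def dualZd_def by auto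
  have piTnz: "\<exists>j<d. piT d e M b j \<noteq> 0" if "\<exists>i<e. b i \<noteq> 0" for b
  proof (rule ccontr)
    assume "\<not> ?thesis"
    then have "\<forall>j<d. (\<Sum>i<e. real_of_int (b i) * real_of_int (M i j)) = 0"
      unfolding piT_def by (auto simp flip: of_int_mult of_int_sum)
    then have "\<forall>k<e. real_of_int (b k) = 0" using inv_zero_real[OF U ed, where c="\<lambda>i. real_of_int (b i)"] by auto
    then show False using that by auto
  qed
  have fdQ: "full_dim e Q"
    unfolding full_dim_def
  proof
    assume "\<exists>cc b. (\<exists>i<e. cc i \<noteq> 0) \<and> (\<forall>x\<in>Q. (\<Sum>i<e. cc i * x i) = b)"
    then obtain cc b where cc: "\<exists>i<e. cc i \<noteq> 0" and cb: "\<forall>x\<in>Q. lin e cc x = b"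
      unfolding lin_def by blast
    define c' where "c' = (\<lambda>j. \<Sum>i<e. cc i * real_of_int (M i j))"
    have "\<forall>u\<in>V. lin d c' u = b"
    proof
      fix u assume "u \<in> V"
      then have "pi u \<in> Q" unfolding Q_def W_def using V_sub_conv[OF Wfin(1)] W_def by auto
      then show "lin d c' u = b" using cb lin_pi unfolding pi_def c'_def by metis
    qed
    then have "\<forall>x\<in>P0. lin d c' x = b" using PP.lin_const_conv V(4) by auto
    moreover have "\<exists>j<d. c' j \<noteq> 0"
    proof (rule ccontr)
      assume "\<not> ?thesis"
      then have "\<forall>k<e. cc k = 0" using inv_zero_real[OF U ed, where c=cc] unfolding c'_def by auto
      then show False using cc by auto
    qed
    ultimately show False using fd unfolding full_dim_def lin_def by blast
  qed
  have nQ: "n \<in> Sset e Q"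
  proof -
    have "pi x0 \<in> fine_adjoint e Q n"
      unfolding fine_adjoint_def
    proof (intro CollectI conjI ballI impI)
      show "pi x0 \<in> Rd e" unfolding pi_def pimap_def Rd_def by auto
      fix b assume b: "b \<in> dualZd e" "\<exists>i<e. b i \<noteq> 0"
      have "hP d P0 (piT d e M b) + n \<le> pairing d (piT d e M b) x0"
        using x0 piTZ piTnz[OF b(2)] unfolding fine_adjoint_def by blast
      then show "hP e Q b + n \<le> pairing e b (pi x0)" unfolding pi_def pairing_pi hQ .
    qed
    then show ?thesis using n0 by (auto simp: Sset_def)
  qed
  have sQ: "s \<le> n" if sS: "s \<in> Sset e Q" for s
  proof -
    obtain yy where yy: "yy \<in> fine_adjoint e Q s" using sS by (auto simp: Sset_def)
    define xx where "xx = (\<lambda>j. \<Sum>k<e. real_of_int (N j k) * yy k)"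
    have pixx: "pi xx i = yy i" if "i < e" for i
    proof -
      have "pi xx i = (\<Sum>j<d. real_of_int (M i j) * (\<Sum>k<e. real_of_int (N j k) * yy k))"
        unfolding pi_def pimap_def xx_def using that by simp
      also have "\<dots> = (\<Sum>k<e. (\<Sum>j<d. real_of_int (M i j) * real_of_int (N j k)) * yy k)"
        by (simp add: sum_distrib_left sum_distrib_right sum.swap[of _ "{..<e}" "{..<d}"] mult.assoc)
      also have "\<dots> = (\<Sum>k<e. (if k = i then yy k else 0))"
        using U that ed by (intro sum.cong) (auto simp: unimod_def mmul_real[symmetric] idm_def)
      also have "\<dots> = yy i" using that by simp
      finally show ?thesis .
    qed
    have pxx: "pairing e b (pi xx) = pairing e b yy" for b
      unfolding pairing_def using pixx by (intro sum.cong) auto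
    have key: "pairing d a xx \<ge> hP d P0 a + s" if aT: "a \<in> T" for a
    proof -
      define b where "b = (\<lambda>i. if i < e then (\<Sum>k<d. a k * N k i) else 0)"
      have ab: "piT d e M b = a"
      proof
        fix j
        show "piT d e M b j = a j"
        proof (cases "j < d")
          case True
          have "piT d e M b j = (\<Sum>i<e. (\<Sum>k<d. a k * N k i) * M i j)"
            unfolding piT_def b_def using True by simp
          also have "\<dots> = (\<Sum>k<d. a k * (\<Sum>i<e. N k i * M i j))"
            by (simp add: sum_distrib_left sum_distrib_right sum.swap[of _ "{..<e}" "{..<d}"] mult.assoc)
          also have "\<dots> = (\<Sum>k<d. a k * (idm k j - N k e * M e j))"
          proof (rule sum.cong)
            fix k assume k: "k \<in> {..<d}"
            have "(\<Sum>i<d. N k i * M i j) = idm k j" using U k True by (auto simp: unimod_def mmul_def)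
            then have "(\<Sum>i<e. N k i * M i j) + N k e * M e j = idm k j" using dS by simp
            then have "(\<Sum>i<e. N k i * M i j) = idm k j - N k e * M e j" by (simp add: eq_diff_eq)
            then show "a k * (\<Sum>i<e. N k i * M i j) = a k * (idm k j - N k e * M e j)" by simp
          qed simp
          also have "\<dots> = (\<Sum>k<d. a k * idm k j) - (\<Sum>k<d. a k * N k e) * M e j"
            by (simp add: sum_subtractf right_diff_distrib sum_distrib_right mult.assoc)
          also have "(\<Sum>k<d. a k * idm k j) = (\<Sum>k<d. if k = j then a j else 0)"
            by (rule sum.cong) (auto simp: idm_def)
          also have "(\<Sum>k<d. if k = j then a j else 0) - (\<Sum>k<d. a k * N k e) * M e j = a j"
            using aNe[OF aT] True by simp
          finally show ?thesis .
        next
          case False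
          then show ?thesis using Tprop aT by (auto simp: piT_def dualZd_def)
        qed
      qed
      have bZ: "b \<in> dualZd e" unfolding b_def dualZd_def by auto
      have bnz: "\<exists>i<e. b i \<noteq> 0"
      proof (rule ccontr)
        assume "\<not> ?thesis"
        then have "\<forall>j. piT d e M b j = 0" unfolding piT_def by auto
        then show False using ab Tprop aT by auto
      qed
      have "hP e Q b + s \<le> pairing e b yy" using yy bZ bnz unfolding fine_adjoint_def by blast
      then show ?thesis using hQ[of b] pxx[of b] ab unfolding pi_def pairing_pi by simp
    qed
    have "(\<Sum>a\<in>T. l a * (hP d P0 a + s)) \<le> (\<Sum>a\<in>T. l a * pairing d a xx)"
      using key l(1) by (intro sum_mono mult_left_mono) auto
    also have "\<dots> = 0" unfolding sum_T_pairing using l(3) by simp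
    finally have A0: "(\<Sum>a\<in>T. l a * (hP d P0 a + s)) \<le> 0" .
    have "(\<Sum>a\<in>T. l a * (hP d P0 a + s)) = (\<Sum>a\<in>T. l a * hP d P0 a) + (\<Sum>a\<in>T. l a) * s"
      by (simp add: distrib_left sum.distrib sum_distrib_right)
    then have A: "(\<Sum>a\<in>T. l a * hP d P0 a) + s \<le> 0" using A0 l(2) by simp
    have "(\<Sum>a\<in>T. l a * (hP d P0 a + n)) = (\<Sum>a\<in>T. l a * pairing d a x0)"
      using Tprop by (intro sum.cong) auto
    also have "\<dots> = 0" unfolding sum_T_pairing using l(3) by simp
    finally have B0: "(\<Sum>a\<in>T. l a * (hP d P0 a + n)) = 0" .
    have "(\<Sum>a\<in>T. l a * (hP d P0 a + n)) = (\<Sum>a\<in>T. l a * hP d P0 a) + (\<Sum>a\<in>T. l a) * n"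
      by (simp add: distrib_left sum.distrib sum_distrib_right)
    then have B: "(\<Sum>a\<in>T. l a * hP d P0 a) + n = 0" using B0 l(2) by simp
    show ?thesis using A B by linarith
  qed
  have "fine_number e Q = n"
    unfolding fine_number_Sset
  proof (rule antisym)
    show "Sup (Sset e Q) \<le> n" using nQ sQ by (intro cSup_least) auto
    show "n \<le> Sup (Sset e Q)" using nQ QQ.Sset_bdd_above[OF e0] Q_def by (intro cSup_upper) auto
  qed
  then show ?thesis using lpQ fdQ unfolding e_def n_def by auto
qed


theorem mainTheorem1:
  fixes d :: nat
  assumes "d > 1"
  shows "fine_spectrum (d - 1) \<subseteq> fine_spectrum d \<and>
         fine_spectrum d - fine_spectrum (d - 1) \<subseteq>
           {fine_codegree d P | P. lattice_polytope d P \<and> full_dim d P \<and>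
              (\<exists>x. fine_core d P = {x})}"
proof -
  have S1: "fine_spectrum (d - 1) \<subseteq> fine_spectrum d"
  proof
    fix \<mu> assume "\<mu> \<in> fine_spectrum (d - 1)"
    then obtain Q where Q: "\<mu> = fine_codegree (d - 1) Q" "lattice_polytope (d - 1) Q" "full_dim (d - 1) Q"
      by (auto simp: fine_spectrum_def)
    then obtain P where P: "lattice_polytope d P" "full_dim d P" "fine_number d P = fine_number (d - 1) Q"
      using part1[OF assms] by blast
    then have "\<mu> = fine_codegree d P" using Q(1) by (simp add: fine_codegree_def)
    then show "\<mu> \<in> fine_spectrum d" using P unfolding fine_spectrum_def by blast
  qed
  have S2: "fine_spectrum d - fine_spectrum (d - 1) \<subseteq>
           {fine_codegree d P | P. lattice_polytope d P \<and> full_dim d P \<and> (\<exists>x. fine_core d P = {x})}"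
  proof
    fix \<mu> assume m: "\<mu> \<in> fine_spectrum d - fine_spectrum (d - 1)"
    then obtain P where P: "\<mu> = fine_codegree d P" "lattice_polytope d P" "full_dim d P"
      by (auto simp: fine_spectrum_def)
    have nin: "\<mu> \<notin> fine_spectrum (d - 1)" using m by auto
    show "\<mu> \<in> {fine_codegree d P | P. lattice_polytope d P \<and> full_dim d P \<and> (\<exists>x. fine_core d P = {x})}"
    proof (cases "\<exists>x. fine_core d P = {x}")
      case True
      then show ?thesis using P by blast
    next
      case False
      then obtain Q where Q: "lattice_polytope (d - 1) Q" "full_dim (d - 1) Q" "fine_number (d - 1) Q = fine_number d P"
        using part2[OF assms P(2) P(3)] by blast
      then have "\<mu> = fine_codegree (d - 1) Q" using P(1) by (simp add: fine_codegree_def)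
      then have "\<mu> \<in> fine_spectrum (d - 1)" using Q unfolding fine_spectrum_def by blast
      then show ?thesis using nin by simp
    qed
  qed
  show ?thesis using S1 S2 by blast
qed

end
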